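(* Let $C$ be a maximal independent set of the Kneser graph $\Gamma$ of flags of type $\{2,3\}$ of $\mathrm{PG}(6,q)$. If there are more than $q^7+2q^6+2q^5+3q^4+2q^3+2q^2+q+1$ saturated solids for $C$, then $C=\Lambda(H,\mathcal{E})$ for some hyperplane $H$ and some maximal independent set $\mathcal{E}$ of the Kneser graph of planes of $H$.
   Context: Dimensions are projective (planes 2, solids 3, hyperplanes 5). A flag of type $\{2,3\}$ is a pair $(E,S)$ of a plane $E$ and a solid $S$ with $E\subseteq S$; in $\Gamma$ distinct flags $(E,S),(E',S')$ are adjacent iff $E\cap S'=\emptyset$ and $E'\cap S=\emptyset$. A solid $S$ is saturated for $C$ if $(E,S)\in C$ for all planes $E$ of $S$. The Kneser graph of planes of $H$ has planes of $H$ as vertices, adjacent iff disjoint; a maximal independent set of it is a maximal set of pairwise intersecting planes of $H$. $\Lambda(H,\mathcal{E})$ is the set of all flags $(E,S)$ with $S\subseteq H$ or $E\in\mathcal{E}$. *)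

theory Defs
  imports "HOL-Analysis.Analysis" "HOL-Library.Numeral_Type"
begin

text \<open>The projective space PG(n-1,q) is modelled by the vector space 'a^'n over a finite
field 'a with q = CARD('a). A projective subspace of projective dimension k is a
linear subspace of vector dimension k+1. Two projective subspaces are disjoint iff
their vector subspaces meet only in 0.\<close>

definition proj_subspace :: "nat \<Rightarrow> ('a::field ^ 'n) set \<Rightarrow> bool" where
  "proj_subspace k U \<longleftrightarrow> vec.subspace U \<and> vec.dim U = k + 1"

abbreviation plane :: "('a::field ^ 'n) set \<Rightarrow> bool" where
  "plane U \<equiv> proj_subspace 2 U"

abbreviation solid :: "('a::field ^ 'n) set \<Rightarrow> bool" where
  "solid U \<equiv> proj_subspace 3 U"

definition proj_disjoint :: "('a::field ^ 'n) set \<Rightarrow> ('a ^ 'n) set \<Rightarrow> bool" where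
  "proj_disjoint U W \<longleftrightarrow> U \<inter> W = {0}"

definition flag23 :: "('a::field ^ 'n) set \<times> ('a ^ 'n) set \<Rightarrow> bool" where
  "flag23 F \<longleftrightarrow> plane (fst F) \<and> solid (snd F) \<and> fst F \<subseteq> snd F"

definition flag_adj :: "('a::field ^ 'n) set \<times> ('a ^ 'n) set \<Rightarrow> ('a ^ 'n) set \<times> ('a ^ 'n) set \<Rightarrow> bool" where
  "flag_adj F G \<longleftrightarrow> F \<noteq> G \<and> proj_disjoint (fst F) (snd G) \<and> proj_disjoint (fst G) (snd F)"

definition flag_independent :: "(('a::field ^ 'n) set \<times> ('a ^ 'n) set) set \<Rightarrow> bool" where
  "flag_independent C \<longleftrightarrow> (\<forall>F\<in>C. flag23 F) \<and> (\<forall>F\<in>C. \<forall>G\<in>C. \<not> flag_adj F G)"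

definition flag_max_independent :: "(('a::field ^ 'n) set \<times> ('a ^ 'n) set) set \<Rightarrow> bool" where
  "flag_max_independent C \<longleftrightarrow> flag_independent C \<and>
     (\<forall>D. flag_independent D \<and> C \<subseteq> D \<longrightarrow> D = C)"

definition saturated :: "(('a::field ^ 'n) set \<times> ('a ^ 'n) set) set \<Rightarrow> ('a ^ 'n) set \<Rightarrow> bool" where
  "saturated C S \<longleftrightarrow> (\<forall>E. plane E \<and> E \<subseteq> S \<longrightarrow> (E, S) \<in> C)"

definition plane_independent_in :: "('a::field ^ 'n) set \<Rightarrow> ('a ^ 'n) set set \<Rightarrow> bool" where
  "plane_independent_in H \<E> \<longleftrightarrow> (\<forall>E\<in>\<E>. plane E \<and> E \<subseteq> H) \<and>
     (\<forall>E\<in>\<E>. \<forall>E'\<in>\<E>. \<not> proj_disjoint E E')"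

definition plane_max_independent_in :: "('a::field ^ 'n) set \<Rightarrow> ('a ^ 'n) set set \<Rightarrow> bool" where
  "plane_max_independent_in H \<E> \<longleftrightarrow> plane_independent_in H \<E> \<and>
     (\<forall>\<F>. plane_independent_in H \<F> \<and> \<E> \<subseteq> \<F> \<longrightarrow> \<F> = \<E>)"

definition Lambda :: "('a::field ^ 'n) set \<Rightarrow> ('a ^ 'n) set set \<Rightarrow> (('a ^ 'n) set \<times> ('a ^ 'n) set) set" where
  "Lambda H \<E> = {F. flag23 F \<and> (snd F \<subseteq> H \<or> fst F \<in> \<E>)}"

end

theory Submission
  imports Defs
begin

lemma card_span_indep:
  fixes B :: "('a::{field,finite} ^ 'n) set"
  assumes "vec.independent B"
  shows "card (vec.span B) = CARD('a) ^ card B"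
proof -
  have fB: "finite B" using assms vec.finiteI_independent by blast
  let ?f = "\<lambda>u. \<Sum>v\<in>B. u v *s v"
  have "vec.span B = ?f ` (PiE B (\<lambda>_. UNIV))"
  proof
    show "vec.span B \<subseteq> ?f ` (PiE B (\<lambda>_. UNIV))"
    proof
      fix x assume "x \<in> vec.span B"
      then obtain u where u: "x = ?f u" using vec.span_finite[OF fB] by blast
      have "x = ?f (restrict u B)" using u by (auto intro: sum.cong)
      moreover have "restrict u B \<in> PiE B (\<lambda>_. UNIV)" by auto
      ultimately show "x \<in> ?f ` (PiE B (\<lambda>_. UNIV))" by blast
    qed
    show "?f ` (PiE B (\<lambda>_. UNIV)) \<subseteq> vec.span B"
      using vec.span_finite[OF fB] by auto
  qed
  moreover have "inj_on ?f (PiE B (\<lambda>_. UNIV))"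
  proof (rule inj_onI)
    fix u w assume u: "u \<in> PiE B (\<lambda>_. UNIV)" and w: "w \<in> PiE B (\<lambda>_. UNIV)" and e: "?f u = ?f w"
    have z: "(\<Sum>v\<in>B. (u v - w v) *s v) = 0"
      using e by (simp add: vector_sub_rdistrib sum_subtractf)
    have "\<forall>c. (\<Sum>v\<in>B. c v *s v) = 0 \<longrightarrow> (\<forall>v\<in>B. c v = 0)"
      using assms unfolding vec.independent_explicit by blast
    from spec[OF this, of "\<lambda>v. u v - w v"] z have "\<forall>v\<in>B. u v - w v = 0"
      by simp
    then show "u = w" using u w by (auto simp: PiE_iff extensional_def fun_eq_iff)
  qed
  ultimately have "card (vec.span B) = card (PiE B (\<lambda>_. UNIV :: 'a set))"
    by (simp add: card_image)
  also have "\<dots> = CARD('a) ^ card B" by (simp add: card_PiE fB)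
  finally show ?thesis .
qed

lemma card_subspace:
  fixes U :: "('a::{field,finite} ^ 'n) set"
  assumes "vec.subspace U"
  shows "card U = CARD('a) ^ vec.dim U"
proof -
  obtain B where "finite B" "B \<subseteq> U" "vec.independent B" "vec.span B = U" "card B = vec.dim U"
    using vec.basis_subspace_exists[OF assms] by blast
  then show ?thesis using card_span_indep by metis
qed

fun relind :: "('a::field ^ 'n) set \<Rightarrow> ('a ^ 'n) list \<Rightarrow> bool" where
  "relind K [] = True"
| "relind K (v # vs) = (relind K vs \<and> v \<notin> vec.span (K \<union> set vs))"

lemma dim_relind:
  fixes K :: "('a::{field,finite} ^ 'n) set"
  shows "relind K vs \<Longrightarrow> vec.dim (K \<union> set vs) = vec.dim K + length vs"
proof (induction vs)
  case Nil then show ?case by simp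
next
  case (Cons v vs)
  then have "vec.dim (insert v (K \<union> set vs)) = vec.dim (K \<union> set vs) + 1"
    by (simp add: vec.dim_insert)
  then show ?case using Cons by simp
qed

lemma relind_mono:
  fixes K :: "('a::{field,finite} ^ 'n) set"
  shows "relind K vs \<Longrightarrow> K' \<subseteq> K \<Longrightarrow> relind K' vs"
proof (induction vs)
  case Nil then show ?case by simp
next
  case (Cons v vs)
  have "vec.span (K' \<union> set vs) \<subseteq> vec.span (K \<union> set vs)"
    using Cons.prems(2) by (intro vec.span_mono) blast
  then show ?case using Cons by auto
qed

lemma finite_lists_fixed:
  "finite {vs :: ('a::finite) list. length vs = j \<and> P vs}"
proof -
  have "{vs :: 'a list. length vs = j \<and> P vs} \<subseteq> {xs. set xs \<subseteq> UNIV \<and> length xs = j}" by auto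
  moreover have "finite {xs :: 'a list. set xs \<subseteq> UNIV \<and> length xs = j}"
    by (rule finite_lists_length_eq) simp
  ultimately show ?thesis by (rule finite_subset)
qed

lemma card_relind:
  fixes K U :: "('a::{field,finite} ^ 'n) set"
  assumes K: "vec.subspace K" and U: "vec.subspace U" and KU: "K \<subseteq> U"
  shows "card {vs. length vs = j \<and> set vs \<subseteq> U \<and> relind K vs}
       = (\<Prod>i<j. CARD('a) ^ vec.dim U - CARD('a) ^ (vec.dim K + i))"
proof (induction j)
  case 0
  have "{vs. length vs = 0 \<and> set vs \<subseteq> U \<and> relind K vs} = {[]}" by auto
  then show ?case by simp
next
  case (Suc j)
  let ?S = "\<lambda>j. {vs. length vs = j \<and> set vs \<subseteq> U \<and> relind K vs}"
  let ?c = "CARD('a) ^ vec.dim U - CARD('a) ^ (vec.dim K + j)"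
  have eq: "?S (Suc j) = (\<lambda>(vs, v). v # vs) ` (SIGMA vs:?S j. U - vec.span (K \<union> set vs))"
  proof
    show "?S (Suc j) \<subseteq> (\<lambda>(vs, v). v # vs) ` (SIGMA vs:?S j. U - vec.span (K \<union> set vs))"
    proof
      fix ws assume "ws \<in> ?S (Suc j)"
      then obtain v vs where ws: "ws = v # vs" and "length vs = j" "set vs \<subseteq> U" "v \<in> U"
        "relind K vs" "v \<notin> vec.span (K \<union> set vs)"
        by (cases ws) auto
      then show "ws \<in> (\<lambda>(vs, v). v # vs) ` (SIGMA vs:?S j. U - vec.span (K \<union> set vs))"
        by (auto intro!: image_eqI[of _ _ "(vs, v)"])
    qed
  qed auto
  have inj: "inj_on (\<lambda>(vs, v). v # vs) (SIGMA vs:?S j. U - vec.span (K \<union> set vs))"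
    by (auto simp: inj_on_def)
  have cardfib: "card (U - vec.span (K \<union> set vs)) = ?c" if "vs \<in> ?S j" for vs
  proof -
    from that have r: "relind K vs" "length vs = j" "set vs \<subseteq> U" by auto
    have sub: "vec.span (K \<union> set vs) \<subseteq> U"
      using r(3) KU U by (intro vec.span_minimal) auto
    have "card (vec.span (K \<union> set vs)) = CARD('a) ^ (vec.dim K + j)"
      using card_subspace[of "vec.span (K \<union> set vs)"] dim_relind[OF r(1)] r(2)
      by simp
    moreover have "card U = CARD('a) ^ vec.dim U" using card_subspace[OF U] .
    ultimately show ?thesis using sub by (simp add: card_Diff_subset)
  qed
  have "card (?S (Suc j)) = card (SIGMA vs:?S j. U - vec.span (K \<union> set vs))"
    unfolding eq by (rule card_image[OF inj])
  also have "\<dots> = (\<Sum>vs\<in>?S j. card (U - vec.span (K \<union> set vs)))"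
    by (rule card_SigmaI) (auto simp: finite_lists_fixed)
  also have "\<dots> = (\<Sum>vs\<in>?S j. ?c)" using cardfib by (rule sum.cong[OF refl])
  also have "\<dots> = card (?S j) * ?c" by simp
  finally show ?case using Suc.IH by simp
qed

lemma dim_sum_int:
  fixes S T :: "('a::field ^ 'n) set"
  assumes "vec.subspace S" "vec.subspace T"
  shows "vec.dim (S \<union> T) + vec.dim (S \<inter> T) = vec.dim S + vec.dim T"
proof -
  have eS: "vec.span S = S" using assms(1) by simp
  have eT: "vec.span T = T" using assms(2) by simp
  have h: "vec.span (S \<union> T) = {x + y |x y. x \<in> S \<and> y \<in> T}"
    using vec.span_Un[of S T] unfolding eS eT .
  have "vec.dim (vec.span (S \<union> T)) = vec.dim {x + y |x y. x \<in> S \<and> y \<in> T}"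
    by (simp only: h)
  then have "vec.dim (S \<union> T) = vec.dim {x + y |x y. x \<in> S \<and> y \<in> T}"
    by simp
  then show ?thesis using vec.dim_sums_Int[OF assms] by simp
qed

lemma gauss_upper:
  fixes K U :: "('a::{field,finite} ^ 'n) set"
  assumes K: "vec.subspace K" and U: "vec.subspace U" and KU: "K \<subseteq> U"
    and m: "vec.dim K + j = m"
  shows "card {W. vec.subspace W \<and> K \<subseteq> W \<and> W \<subseteq> U \<and> vec.dim W = m}
           * (\<Prod>i<j. CARD('a) ^ m - CARD('a) ^ (vec.dim K + i))
         \<le> (\<Prod>i<j. CARD('a) ^ vec.dim U - CARD('a) ^ (vec.dim K + i))"
proof -
  let ?Ws = "{W. vec.subspace W \<and> K \<subseteq> W \<and> W \<subseteq> U \<and> vec.dim W = m}"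
  let ?F = "\<lambda>W. {vs. length vs = j \<and> set vs \<subseteq> W \<and> relind K vs}"
  let ?c = "(\<Prod>i<j. CARD('a) ^ m - CARD('a) ^ (vec.dim K + i))"
  have cF: "card (?F W) = ?c" if "W \<in> ?Ws" for W
    using card_relind[OF K, of W j] that by auto
  have spanF: "vec.span (K \<union> set vs) = W" if "W \<in> ?Ws" "vs \<in> ?F W" for W vs
  proof -
    have sub: "vec.span (K \<union> set vs) \<subseteq> W" using that by (intro vec.span_minimal) auto
    have "vec.dim (vec.span (K \<union> set vs)) = m" using dim_relind[of K vs] that m by simp
    then show ?thesis using vec.subspace_dim_equal[OF _ _ sub] that by auto
  qed
  have disj: "\<forall>W\<in>?Ws. \<forall>W'\<in>?Ws. W \<noteq> W' \<longrightarrow> ?F W \<inter> ?F W' = {}"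
  proof (intro ballI impI)
    fix W W' assume "W \<in> ?Ws" "W' \<in> ?Ws" "W \<noteq> W'"
    show "?F W \<inter> ?F W' = {}"
    proof (rule ccontr)
      assume "?F W \<inter> ?F W' \<noteq> {}"
      then obtain vs where v1: "vs \<in> ?F W" and v2: "vs \<in> ?F W'" by blast
      have "W = W'" using spanF[OF \<open>W \<in> ?Ws\<close> v1] spanF[OF \<open>W' \<in> ?Ws\<close> v2] by simp
      then show False using \<open>W \<noteq> W'\<close> by simp
    qed
  qed
  have "card (\<Union>W\<in>?Ws. ?F W) = (\<Sum>W\<in>?Ws. card (?F W))"
    by (rule card_UN_disjoint) (auto simp: finite_lists_fixed disj)
  also have "\<dots> = card ?Ws * ?c" using cF by simp
  finally have e: "card (\<Union>W\<in>?Ws. ?F W) = card ?Ws * ?c" .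
  have "(\<Union>W\<in>?Ws. ?F W) \<subseteq> {vs. length vs = j \<and> set vs \<subseteq> U \<and> relind K vs}" by auto
  then have "card (\<Union>W\<in>?Ws. ?F W) \<le> card {vs. length vs = j \<and> set vs \<subseteq> U \<and> relind K vs}"
    by (intro card_mono) (auto simp: finite_lists_fixed)
  then show ?thesis using e card_relind[OF K U KU, of j] by simp
qed

lemma disj_lower:
  fixes K U :: "('a::{field,finite} ^ 'n) set"
  assumes K: "vec.subspace K" and U: "vec.subspace U" and KU: "K \<subseteq> U"
  shows "(\<Prod>i<j. CARD('a) ^ vec.dim U - CARD('a) ^ (vec.dim K + i))
       \<le> card {W. vec.subspace W \<and> W \<subseteq> U \<and> vec.dim W = j \<and> W \<inter> K = {0}}
           * (\<Prod>i<j. CARD('a) ^ j - CARD('a) ^ i)"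
proof -
  let ?Ds = "{W. vec.subspace W \<and> W \<subseteq> U \<and> vec.dim W = j \<and> W \<inter> K = {0}}"
  let ?G = "\<lambda>W. {vs. length vs = j \<and> set vs \<subseteq> W \<and> relind {0} vs}"
  let ?S = "{vs. length vs = j \<and> set vs \<subseteq> U \<and> relind K vs}"
  have z: "vec.subspace {0::'a^'n}" by (simp add: vec.subspace_0)
  have cG: "card (?G W) = (\<Prod>i<j. CARD('a) ^ j - CARD('a) ^ i)" if "W \<in> ?Ds" for W
    using card_relind[OF z, of W j] that by auto
  have cover: "?S \<subseteq> (\<Union>W\<in>?Ds. ?G W)"
  proof
    fix vs assume vs: "vs \<in> ?S"
    have r0: "relind {0} vs" using vs relind_mono[of K vs "{0}"] K by (auto simp: vec.subspace_0)
    have d0: "vec.dim ({0} \<union> set vs) = length vs" using dim_relind[OF r0] by simp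
    have "vec.dim ({0} \<union> set vs) = vec.dim (set vs)"
      using vec.dim_insert[of 0 "set vs"] by (simp add: vec.span_zero)
    then have dW: "vec.dim (vec.span (set vs)) = j" using d0 vs by simp
    have WU: "vec.span (set vs) \<subseteq> U" using vs U by (intro vec.span_minimal) auto
    have "vec.dim (K \<union> vec.span (set vs)) = vec.dim K + j"
    proof -
      have "vec.span (K \<union> vec.span (set vs)) = vec.span (K \<union> set vs)"
        by (simp add: vec.span_Un vec.span_span)
      then have "vec.dim (vec.span (K \<union> vec.span (set vs))) = vec.dim (vec.span (K \<union> set vs))"
        by (simp only:)
      then have "vec.dim (K \<union> vec.span (set vs)) = vec.dim (K \<union> set vs)"
        by simp
      then show ?thesis using dim_relind[of K vs] vs by simp
    qed
    then have "vec.dim (K \<inter> vec.span (set vs)) = 0"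
      using dim_sum_int[OF K, of "vec.span (set vs)"] dW by simp
    then have "K \<inter> vec.span (set vs) \<subseteq> {0}" by simp
    moreover have "0 \<in> K" using K by (rule vec.subspace_0)
    ultimately have "vec.span (set vs) \<inter> K = {0}" using vec.span_zero by blast
    then have "vec.span (set vs) \<in> ?Ds" using dW WU by auto
    moreover have "vs \<in> ?G (vec.span (set vs))" using vs r0 by (auto intro: vec.span_base)
    ultimately show "vs \<in> (\<Union>W\<in>?Ds. ?G W)" by blast
  qed
  have "card ?S \<le> card (\<Union>W\<in>?Ds. ?G W)"
    by (rule card_mono[OF _ cover]) (auto simp: finite_lists_fixed)
  also have "\<dots> \<le> (\<Sum>W\<in>?Ds. card (?G W))" by (rule card_UN_le) simp
  also have "\<dots> = card ?Ds * (\<Prod>i<j. CARD('a) ^ j - CARD('a) ^ i)" using cG by simp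
  finally show ?thesis using card_relind[OF K U KU, of j] by simp
qed

lemma pdiff: "1 \<le> (q::nat) \<Longrightarrow> a \<le> b \<Longrightarrow> int (q^b - q^a) = int q ^ b - int q ^ a"
  by (simp add: of_nat_diff power_increasing)

lemma pdiff1: "1 \<le> (q::nat) \<Longrightarrow> int (q^b - 1) = int q ^ b - 1"
  by (simp add: of_nat_diff one_le_power)

lemma pdiffq: "1 \<le> (q::nat) \<Longrightarrow> 1 \<le> b \<Longrightarrow> int (q^b - q) = int q ^ b - int q"
  using pdiff[of q 1 b] by simp

lemma ppos: "2 \<le> (q::nat) \<Longrightarrow> a < b \<Longrightarrow> 0 < q^b - q^a"
  by (simp add: power_strict_increasing)

lemma count_from_upper: "c * P \<le> Q \<Longrightarrow> int Q = int R * int P \<Longrightarrow> 0 < (P::nat) \<Longrightarrow> c \<le> R"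
proof -
  assume a: "c * P \<le> Q" "int Q = int R * int P" "0 < P"
  then have "Q = R * P" by (metis of_nat_eq_iff of_nat_mult)
  then show ?thesis using a by simp
qed

lemma card_field_ge2: "2 \<le> CARD('a::{field,finite})"
proof -
  have "card {0::'a, 1} = 2" by simp
  moreover have "card {0::'a, 1} \<le> CARD('a)" by (rule card_mono) auto
  ultimately show ?thesis by simp
qed

lemma dim_UNIV7: "vec.dim (UNIV :: ('a::field ^ 7) set) = 7"
  by (simp add: card_cart_basis)

lemma subspace_UNIV: "vec.subspace (UNIV :: ('a::field ^ 'n) set)"
  by (simp add: vec.subspace_UNIV)

definition hyps :: "('a::field ^ 7) set \<Rightarrow> ('a ^ 7) set set" where
  "hyps U = {G. vec.subspace G \<and> vec.dim G = 6 \<and> U \<subseteq> G}"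

lemma card_hyps4:
  fixes T :: "('a::{field,finite} ^ 7) set"
  assumes "vec.subspace T" "vec.dim T = 4"
  shows "card (hyps T) \<le> CARD('a)^2 + CARD('a) + 1"
proof -
  let ?q = "CARD('a)"
  have q: "2 \<le> ?q" by (rule card_field_ge2)
  have "card (hyps T) * (\<Prod>i<2. ?q ^ 6 - ?q ^ (4 + i)) \<le> (\<Prod>i<2. ?q ^ 7 - ?q ^ (4 + i))"
    using gauss_upper[OF assms(1) subspace_UNIV, of 2 6] assms
    by (simp add: hyps_def card_cart_basis conj_commute)
  then have c: "card (hyps T) * ((?q^6 - ?q^4) * (?q^6 - ?q^5)) \<le> (?q^7 - ?q^4) * (?q^7 - ?q^5)"
    by (simp add: eval_nat_numeral)
  have p: "((x::int)^7 - x^4)*(x^7-x^5) = (x^2+x+1) * ((x^6-x^4)*(x^6-x^5))" for x by algebra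
  have q1: "1 \<le> ?q" using q by simp
  show ?thesis
    apply (rule count_from_upper[OF c])
     apply (simp only: of_nat_mult of_nat_add of_nat_power of_nat_1 pdiff[OF q1] p)
     apply simp
    using ppos[OF q] by simp
qed


lemma card_hyps5:
  fixes L :: "('a::{field,finite} ^ 7) set"
  assumes "vec.subspace L" "vec.dim L = 5"
  shows "card (hyps L) \<le> CARD('a) + 1"
proof -
  let ?q = "CARD('a)"
  have q: "2 \<le> ?q" by (rule card_field_ge2)
  have "card (hyps L) * (\<Prod>i<1. ?q ^ 6 - ?q ^ (5 + i)) \<le> (\<Prod>i<1. ?q ^ 7 - ?q ^ (5 + i))"
    using gauss_upper[OF assms(1) subspace_UNIV, of 1 6] assms
    by (simp add: hyps_def card_cart_basis conj_commute)
  then have c: "card (hyps L) * (?q^6 - ?q^5) \<le> (?q^7 - ?q^5)"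
    by simp
  have p: "((x::int)^7 - x^5) = (x+1) * (x^6-x^5)" for x by algebra
  have q1: "1 \<le> ?q" using q by simp
  show ?thesis
    apply (rule count_from_upper[OF c])
     apply (simp only: of_nat_mult of_nat_add of_nat_power of_nat_1 pdiff[OF q1] p)
     apply simp
    using ppos[OF q] by simp
qed

lemma card_hyps_ge5:
  fixes Q :: "('a::{field,finite} ^ 7) set"
  assumes "5 \<le> vec.dim Q"
  shows "card (hyps Q) \<le> CARD('a) + 1"
proof -
  obtain L where L: "vec.subspace L" "L \<subseteq> vec.span Q" "vec.dim L = 5"
    using vec.choose_subspace_of_subspace[OF assms] by blast
  have "hyps Q \<subseteq> hyps L"
  proof
    fix G assume "G \<in> hyps Q"
    then have "vec.span Q \<subseteq> G" unfolding hyps_def using vec.span_minimal by blast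
    then show "G \<in> hyps L" using \<open>G \<in> hyps Q\<close> L unfolding hyps_def by auto
  qed
  then have "card (hyps Q) \<le> card (hyps L)" by (intro card_mono) auto
  also have "\<dots> \<le> CARD('a) + 1" using card_hyps5[OF L(1,3)] .
  finally show ?thesis .
qed

lemma card_solids_in5:
  fixes L :: "('a::{field,finite} ^ 7) set"
  assumes "vec.subspace L" "vec.dim L = 5"
  shows "card {T. vec.subspace T \<and> vec.dim T = 4 \<and> T \<subseteq> L} \<le> CARD('a)^4 + CARD('a)^3 + CARD('a)^2 + CARD('a) + 1"
proof -
  let ?q = "CARD('a)"
  have q: "2 \<le> ?q" by (rule card_field_ge2)
  have z: "vec.subspace {0::'a^7}" by (simp add: vec.subspace_0)
  have "card {W. vec.subspace W \<and> {0} \<subseteq> W \<and> W \<subseteq> L \<and> vec.dim W = 4} * (\<Prod>i<4. ?q ^ 4 - ?q ^ (0 + i)) \<le> (\<Prod>i<4. ?q ^ vec.dim L - ?q ^ (0 + i))"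
    using gauss_upper[OF z assms(1), of 4 4] assms vec.subspace_0[OF assms(1)] by simp
  moreover have "{W. vec.subspace W \<and> {0} \<subseteq> W \<and> W \<subseteq> L \<and> vec.dim W = 4} = {T. vec.subspace T \<and> vec.dim T = 4 \<and> T \<subseteq> L}"
    using vec.subspace_0 by blast
  ultimately have c: "card {T. vec.subspace T \<and> vec.dim T = 4 \<and> T \<subseteq> L} * ((?q^4 - 1)*(?q^4 - ?q)*(?q^4-?q^2)*(?q^4-?q^3))
      \<le> (?q^5 - 1)*(?q^5 - ?q)*(?q^5-?q^2)*(?q^5-?q^3)"
    using assms by (simp add: eval_nat_numeral mult.assoc)
  have p: "((x::int)^5 - 1)*(x^5 - x)*(x^5-x^2)*(x^5-x^3) = (x^4+x^3+x^2+x+1) * ((x^4 - 1)*(x^4 - x)*(x^4-x^2)*(x^4-x^3))" for x by algebra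
  have q1: "1 \<le> ?q" using q by simp
  show ?thesis
    apply (rule count_from_upper[OF c])
     apply (simp only: of_nat_mult of_nat_add of_nat_power of_nat_1 pdiff[OF q1] pdiff1[OF q1] pdiffq[OF q1] p)
     apply simp
    using ppos[OF q, of 0 4] ppos[OF q, of 1 4] ppos[OF q, of 2 4] ppos[OF q, of 3 4] by simp
qed

lemma card_solids_over3:
  fixes R :: "('a::{field,finite} ^ 7) set"
  assumes "vec.subspace R" "vec.dim R = 3"
  shows "card {T. vec.subspace T \<and> vec.dim T = 4 \<and> R \<subseteq> T} \<le> CARD('a)^3 + CARD('a)^2 + CARD('a) + 1"
proof -
  let ?q = "CARD('a)"
  have q: "2 \<le> ?q" by (rule card_field_ge2)
  have "card {W. vec.subspace W \<and> R \<subseteq> W \<and> W \<subseteq> UNIV \<and> vec.dim W = 4} * (\<Prod>i<1. ?q ^ 4 - ?q ^ (3 + i)) \<le> (\<Prod>i<1. ?q ^ 7 - ?q ^ (3 + i))"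
    using gauss_upper[OF assms(1) subspace_UNIV, of 1 4] assms by (simp add: card_cart_basis)
  then have c: "card {T. vec.subspace T \<and> vec.dim T = 4 \<and> R \<subseteq> T} * (?q^4 - ?q^3) \<le> (?q^7 - ?q^3)"
    by (simp add: conj_commute)
  have p: "((x::int)^7 - x^3) = (x^3+x^2+x+1) * (x^4-x^3)" for x by algebra
  have q1: "1 \<le> ?q" using q by simp
  show ?thesis
    apply (rule count_from_upper[OF c])
     apply (simp only: of_nat_mult of_nat_add of_nat_power of_nat_1 pdiff[OF q1] p)
     apply simp
    using ppos[OF q] by simp
qed


lemma card_solids_meet_line:
  fixes H l :: "('a::{field,finite} ^ 7) set"
  assumes H: "vec.subspace H" "vec.dim H = 6" and l: "vec.subspace l" "vec.dim l = 2" "l \<subseteq> H"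
  shows "card {T. vec.subspace T \<and> vec.dim T = 4 \<and> T \<subseteq> H \<and> T \<inter> l \<noteq> {0}}
    \<le> CARD('a)^7 + 2*CARD('a)^6 + 2*CARD('a)^5 + 3*CARD('a)^4 + 2*CARD('a)^3 + 2*CARD('a)^2 + CARD('a) + 1"
proof -
  let ?q = "CARD('a)"
  let ?All = "{T. vec.subspace T \<and> vec.dim T = 4 \<and> T \<subseteq> H}"
  let ?Disj = "{W. vec.subspace W \<and> W \<subseteq> H \<and> vec.dim W = 4 \<and> W \<inter> l = {0}}"
  let ?P = "(?q^4 - 1)*(?q^4 - ?q)*(?q^4-?q^2)*(?q^4-?q^3)"
  have q: "2 \<le> ?q" by (rule card_field_ge2)
  have q1: "1 \<le> ?q" using q by simp
  have z: "vec.subspace {0::'a^7}" by (simp add: vec.subspace_0)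
  have "card {W. vec.subspace W \<and> {0} \<subseteq> W \<and> W \<subseteq> H \<and> vec.dim W = 4} * (\<Prod>i<4. ?q ^ 4 - ?q ^ (0 + i)) \<le> (\<Prod>i<4. ?q ^ vec.dim H - ?q ^ (0 + i))"
    using gauss_upper[OF z H(1), of 4 4] H vec.subspace_0[OF H(1)] by simp
  moreover have "{W. vec.subspace W \<and> {0} \<subseteq> W \<and> W \<subseteq> H \<and> vec.dim W = 4} = ?All"
    using vec.subspace_0 by blast
  ultimately have cA: "card ?All * ?P \<le> (?q^6 - 1)*(?q^6 - ?q)*(?q^6-?q^2)*(?q^6-?q^3)"
    using H by (simp add: eval_nat_numeral mult.assoc)
  have "(\<Prod>i<4. ?q ^ vec.dim H - ?q ^ (vec.dim l + i)) \<le> card ?Disj * (\<Prod>i<4. ?q ^ 4 - ?q ^ i)"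
    using disj_lower[OF l(1) H(1) l(3), of 4] by simp
  then have cD: "(?q^6 - ?q^2)*(?q^6 - ?q^3)*(?q^6-?q^4)*(?q^6-?q^5) \<le> card ?Disj * ?P"
    using H l by (simp add: eval_nat_numeral mult.assoc)
  have p1: "((x::int)^6-1)*(x^6-x)*(x^6-x^2)*(x^6-x^3) = (x^8 + x^7 + 2*x^6 + 2*x^5 + 3*x^4 + 2*x^3 + 2*x^2 + x + 1)*((x^4-1)*(x^4-x)*(x^4-x^2)*(x^4-x^3))" for x
    by algebra
  have p2: "((x::int)^6-x^2)*(x^6-x^3)*(x^6-x^4)*(x^6-x^5) = x^8*((x^4-1)*(x^4-x)*(x^4-x^2)*(x^4-x^3))" for x
    by algebra
  have Ppos: "0 < ?P" using ppos[OF q, of 0 4] ppos[OF q, of 1 4] ppos[OF q, of 2 4] ppos[OF q, of 3 4] by simp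
  define x where "x = int ?q"
  define NP where "NP = x^7 + 2*x^6 + 2*x^5 + 3*x^4 + 2*x^3 + 2*x^2 + x + 1"
  have iP: "int ?P = (x^4-1)*(x^4-x)*(x^4-x^2)*(x^4-x^3)"
    unfolding x_def by (simp only: of_nat_mult pdiff[OF q1] pdiff1[OF q1] pdiffq[OF q1])
  have iA: "int ((?q^6 - 1)*(?q^6 - ?q)*(?q^6-?q^2)*(?q^6-?q^3)) = (x^8 + NP) * int ?P"
  proof -
    have "int ((?q^6 - 1)*(?q^6 - ?q)*(?q^6-?q^2)*(?q^6-?q^3)) = (x^6-1)*(x^6-x)*(x^6-x^2)*(x^6-x^3)"
      unfolding x_def by (simp only: of_nat_mult pdiff[OF q1] pdiff1[OF q1] pdiffq[OF q1])
    also have "\<dots> = (x^8 + NP) * int ?P" unfolding iP NP_def p1 by (simp only: add.assoc)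
    finally show ?thesis .
  qed
  have iB: "int ((?q^6 - ?q^2)*(?q^6 - ?q^3)*(?q^6-?q^4)*(?q^6-?q^5)) = x^8 * int ?P"
  proof -
    have "int ((?q^6 - ?q^2)*(?q^6 - ?q^3)*(?q^6-?q^4)*(?q^6-?q^5)) = (x^6-x^2)*(x^6-x^3)*(x^6-x^4)*(x^6-x^5)"
      unfolding x_def by (simp only: of_nat_mult pdiff[OF q1])
    also have "\<dots> = x^8 * int ?P" unfolding iP p2 ..
    finally show ?thesis .
  qed
  have PP: "0 < int ?P" using Ppos by (simp only: of_nat_0_less_iff)
  have "int (card ?All) * int ?P = int (card ?All * ?P)" by (rule of_nat_mult[symmetric])
  also have "\<dots> \<le> int ((?q^6 - 1)*(?q^6 - ?q)*(?q^6-?q^2)*(?q^6-?q^3))" using cA by (simp only: of_nat_le_iff)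
  also have "\<dots> = (x^8 + NP) * int ?P" by (rule iA)
  finally have A0: "int (card ?All) * int ?P \<le> (x^8 + NP) * int ?P" .
  have A: "int (card ?All) \<le> x^8 + NP"
    using mult_right_le_imp_le[OF A0 PP] .
  have "x^8 * int ?P = int ((?q^6 - ?q^2)*(?q^6 - ?q^3)*(?q^6-?q^4)*(?q^6-?q^5))" by (rule iB[symmetric])
  also have "\<dots> \<le> int (card ?Disj * ?P)" using cD by (simp only: of_nat_le_iff)
  also have "\<dots> = int (card ?Disj) * int ?P" by (rule of_nat_mult)
  finally have D0: "x^8 * int ?P \<le> int (card ?Disj) * int ?P" .
  have D: "x^8 \<le> int (card ?Disj)"
    using mult_right_le_imp_le[OF D0 PP] .
  have le: "card ?Disj \<le> card ?All" by (rule card_mono) auto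
  have "int (card ?All - card ?Disj) = int (card ?All) - int (card ?Disj)" using le by (rule of_nat_diff)
  also have "\<dots> \<le> NP" using A D by linarith
  also have "NP = int (?q^7 + 2*?q^6 + 2*?q^5 + 3*?q^4 + 2*?q^3 + 2*?q^2 + ?q + 1)"
    unfolding NP_def x_def by simp
  finally have fin: "card ?All - card ?Disj \<le> ?q^7 + 2*?q^6 + 2*?q^5 + 3*?q^4 + 2*?q^3 + 2*?q^2 + ?q + 1"
    by (simp only: of_nat_le_iff)
  have "{T. vec.subspace T \<and> vec.dim T = 4 \<and> T \<subseteq> H \<and> T \<inter> l \<noteq> {0}} = ?All - ?Disj" by auto
  moreover have "card (?All - ?Disj) = card ?All - card ?Disj"
    by (rule card_Diff_subset) auto
  ultimately show ?thesis using fin by simp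
qed

lemma pow_chain: "2 \<le> (q::nat) \<Longrightarrow> 2*q^k \<le> q^(Suc k)"
  by simp

lemma ineq1: assumes "2 \<le> (q::nat)" shows "(q^2+q+1)*(q^2+q+1)*(q^2+q+1) \<le> q^7 + 2*q^6 + 2*q^5 + 3*q^4 + 2*q^3 + 2*q^2 + q + 1"
proof -
  have e: "int ((q^2+q+1)*(q^2+q+1)*(q^2+q+1)) = int (q^6 + 3*q^5 + 6*q^4 + 7*q^3 + 6*q^2 + 3*q + 1)"
    by (simp only: of_nat_add of_nat_mult of_nat_power of_nat_numeral of_nat_1) algebra
  have "q^6 + 3*q^5 + 6*q^4 + 7*q^3 + 6*q^2 + 3*q + 1 \<le> q^7 + 2*q^6 + 2*q^5 + 3*q^4 + 2*q^3 + 2*q^2 + q + 1"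
    using pow_chain[OF assms, of 6] pow_chain[OF assms, of 5] pow_chain[OF assms, of 4] pow_chain[OF assms, of 3]
      pow_chain[OF assms, of 2] pow_chain[OF assms, of 1] assms
    by (simp add: eval_nat_numeral)
  then show ?thesis using e by (simp only: of_nat_eq_iff)
qed


lemma ineq2: assumes "2 \<le> (q::nat)" shows "(q^2+q+1)*(q^4+q^3+q^2+q+1) + (q^3+q^2+q+1) \<le> q^7 + 2*q^6 + 2*q^5 + 3*q^4 + 2*q^3 + 2*q^2 + q + 1"
proof -
  have e: "int ((q^2+q+1)*(q^4+q^3+q^2+q+1) + (q^3+q^2+q+1)) = int (q^6 + 2*q^5 + 3*q^4 + 4*q^3 + 4*q^2 + 3*q + 2)"
    by (simp only: of_nat_add of_nat_mult of_nat_power of_nat_numeral of_nat_1) algebra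
  have "q^6 + 2*q^5 + 3*q^4 + 4*q^3 + 4*q^2 + 3*q + 2 \<le> q^7 + 2*q^6 + 2*q^5 + 3*q^4 + 2*q^3 + 2*q^2 + q + 1"
    using pow_chain[OF assms, of 6] pow_chain[OF assms, of 5] pow_chain[OF assms, of 4] pow_chain[OF assms, of 3]
      pow_chain[OF assms, of 2] pow_chain[OF assms, of 1] assms
    by (simp add: eval_nat_numeral)
  then show ?thesis using e by (simp only: of_nat_eq_iff)
qed

lemma ineq3: assumes "2 \<le> (q::nat)" shows "(q^4+q^3+q^2+q+1) + (q+1)*((q^2+q)*(q^2+q+1) + q*(q^4+q^3+q^2+q+1)) \<le> q^7 + 2*q^6 + 2*q^5 + 3*q^4 + 2*q^3 + 2*q^2 + q + 1"
proof -
  have e: "int ((q^4+q^3+q^2+q+1) + (q+1)*((q^2+q)*(q^2+q+1) + q*(q^4+q^3+q^2+q+1))) = int (q^6 + 3*q^5 + 6*q^4 + 7*q^3 + 6*q^2 + 3*q + 1)"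
    by (simp only: of_nat_add of_nat_mult of_nat_power of_nat_numeral of_nat_1) algebra
  have "q^6 + 3*q^5 + 6*q^4 + 7*q^3 + 6*q^2 + 3*q + 1 \<le> q^7 + 2*q^6 + 2*q^5 + 3*q^4 + 2*q^3 + 2*q^2 + q + 1"
    using pow_chain[OF assms, of 6] pow_chain[OF assms, of 5] pow_chain[OF assms, of 4] pow_chain[OF assms, of 3]
      pow_chain[OF assms, of 2] pow_chain[OF assms, of 1] assms
    by (simp add: eval_nat_numeral)
  then show ?thesis using e by (simp only: of_nat_eq_iff)
qed

lemma dim_le7: "vec.dim (S::('a::field^7) set) \<le> 7"
  using vec.dim_subset_UNIV[of S] by (simp add: vec.dimension_def card_cart_basis)

lemma extend_to_dim:
  fixes U :: "('a::field^7) set"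
  assumes U: "vec.subspace U" and k: "vec.dim U \<le> k" "k \<le> 7"
  shows "\<exists>W. vec.subspace W \<and> U \<subseteq> W \<and> vec.dim W = k"
proof -
  have "\<forall>d. vec.dim U + d \<le> 7 \<longrightarrow> (\<exists>W. vec.subspace W \<and> U \<subseteq> W \<and> vec.dim W = vec.dim U + d)"
  proof
    fix d show "vec.dim U + d \<le> 7 \<longrightarrow> (\<exists>W. vec.subspace W \<and> U \<subseteq> W \<and> vec.dim W = vec.dim U + d)"
    proof (induction d)
      case 0 then show ?case using U by auto
    next
      case (Suc d)
      show ?case
      proof
        assume le: "vec.dim U + Suc d \<le> 7"
        then obtain W where W: "vec.subspace W" "U \<subseteq> W" "vec.dim W = vec.dim U + d" using Suc by auto
        have "W \<noteq> UNIV"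
        proof
          assume "W = UNIV"
          then have "vec.dim W = 7" by (simp add: card_cart_basis)
          then show False using W(3) le by simp
        qed
        then obtain v where v: "v \<notin> W" by blast
        have sW: "vec.span W = W" using W(1) by simp
        have nv: "v \<notin> vec.span W" unfolding sW by (rule v)
        have "vec.dim (insert v W) = vec.dim W + 1"
          using nv by (simp add: vec.dim_insert)
        then have "vec.dim (vec.span (insert v W)) = vec.dim U + Suc d" using W(3) by simp
        moreover have "U \<subseteq> vec.span (insert v W)" using W(2) vec.span_superset by blast
        ultimately show "\<exists>W. vec.subspace W \<and> U \<subseteq> W \<and> vec.dim W = vec.dim U + Suc d"
          by (intro exI[of _ "vec.span (insert v W)"]) simp
      qed
    qed
  qed
  then show ?thesis using k by (metis le_add_diff_inverse)
qed

lemma hyp_exists: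
  fixes U :: "('a::field^7) set"
  assumes "vec.subspace U" "vec.dim U \<le> 6"
  shows "\<exists>G. G \<in> hyps U"
  using extend_to_dim[OF assms(1), of 6] assms unfolding hyps_def by auto

lemma inter_hyp:
  fixes G S :: "('a::field^7) set"
  assumes G: "vec.subspace G" "vec.dim G = 6" and S: "vec.subspace S" "\<not> S \<subseteq> G"
  shows "vec.dim (G \<inter> S) + 1 = vec.dim S"
proof -
  have "vec.span G \<subset> vec.span (G \<union> S)"
  proof
    show "vec.span G \<subseteq> vec.span (G \<union> S)" by (rule vec.span_mono) blast
    have sG: "vec.span G = G" using G(1) by simp
    show "vec.span G \<noteq> vec.span (G \<union> S)"
      using S(2) vec.span_superset[of "G \<union> S"] unfolding sG by blast
  qed
  then have "vec.dim G < vec.dim (G \<union> S)" by (rule vec.dim_psubset)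
  then have "vec.dim (G \<union> S) = 7" using dim_le7[of "G \<union> S"] G(2) by simp
  then show ?thesis using dim_sum_int[OF G(1) S(1)] G(2) by simp
qed

lemma two_hyps:
  fixes G G' :: "('a::field^7) set"
  assumes "vec.subspace G" "vec.dim G = 6" "vec.subspace G'" "vec.dim G' = 6" "G \<noteq> G'"
  shows "vec.dim (G \<inter> G') = 5"
proof -
  have "\<not> G' \<subseteq> G"
    using vec.subspace_dim_equal[of G' G] assms by auto
  then show ?thesis using inter_hyp[of G G'] assms by simp
qed

lemma eq_by_dim:
  fixes S T :: "('a::field^'n) set"
  shows "vec.subspace S \<Longrightarrow> vec.subspace T \<Longrightarrow> S \<subseteq> T \<Longrightarrow> vec.dim T \<le> vec.dim S \<Longrightarrow> S = T"
  by (rule vec.subspace_dim_equal)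

lemma nonzero_of_dim:
  fixes S :: "('a::field^'n) set"
  shows "vec.subspace S \<Longrightarrow> 1 \<le> vec.dim S \<Longrightarrow> S \<noteq> {0}"
  by auto

lemma dim_inter_ge:
  fixes S T :: "('a::field^7) set"
  assumes "vec.subspace S" "vec.subspace T"
  shows "vec.dim S + vec.dim T \<le> 7 + vec.dim (S \<inter> T)"
  using dim_sum_int[OF assms] dim_le7[of "S \<union> T"] by simp

lemma dim_inter_ge_in:
  fixes S T U :: "('a::field^'n) set"
  assumes "vec.subspace S" "vec.subspace T" "vec.subspace U" "S \<subseteq> U" "T \<subseteq> U"
  shows "vec.dim S + vec.dim T \<le> vec.dim U + vec.dim (S \<inter> T)"
proof -
  have "vec.span (S \<union> T) \<subseteq> U" using assms by (intro vec.span_minimal) auto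
  then have "vec.dim (vec.span (S \<union> T)) \<le> vec.dim U" by (rule vec.dim_subset)
  then show ?thesis using dim_sum_int[OF assms(1,2)] by simp
qed

lemma meet_hyp:
  fixes T T' :: "('a::field^7) set"
  assumes "vec.subspace T" "vec.dim T = 4" "vec.subspace T'" "vec.dim T' = 4" "2 \<le> vec.dim (T \<inter> T')"
  shows "\<exists>G. G \<in> hyps T \<and> T' \<subseteq> G"
proof -
  have "vec.dim (vec.span (T \<union> T')) \<le> 6" using dim_sum_int[of T T'] assms by simp
  then obtain G where "G \<in> hyps (vec.span (T \<union> T'))" using hyp_exists by blast
  then show ?thesis unfolding hyps_def using vec.span_superset[of "T \<union> T'"] by blast
qed

lemma plane_avoiding:
  fixes T K :: "('a::{field,finite}^'n) set"
  assumes T: "vec.subspace T" "vec.dim T = 4" and K: "vec.subspace K" "K \<subseteq> T" "vec.dim K \<le> 1"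
  shows "\<exists>E. vec.subspace E \<and> vec.dim E = 3 \<and> E \<subseteq> T \<and> E \<inter> K = {0}"
proof -
  let ?q = "CARD('a)"
  have q: "2 \<le> ?q" by (rule card_field_ge2)
  have pos: "0 < (\<Prod>i<3. ?q ^ vec.dim T - ?q ^ (vec.dim K + i))"
  proof (rule prod_pos)
    fix i assume "i \<in> {..<(3::nat)}"
    then have "vec.dim K + i < vec.dim T" using T K by auto
    then show "0 < ?q ^ vec.dim T - ?q ^ (vec.dim K + i)" using ppos[OF q] by blast
  qed
  then have "0 < card {W. vec.subspace W \<and> W \<subseteq> T \<and> vec.dim W = 3 \<and> W \<inter> K = {0}} * (\<Prod>i<3. ?q ^ 3 - ?q ^ i)"
    using disj_lower[OF K(1) T(1) K(2), of 3] by linarith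
  then have "{W. vec.subspace W \<and> W \<subseteq> T \<and> vec.dim W = 3 \<and> W \<inter> K = {0}} \<noteq> {}"
    by (metis card.empty mult_0 less_irrefl)
  then obtain W where "W \<in> {W. vec.subspace W \<and> W \<subseteq> T \<and> vec.dim W = 3 \<and> W \<inter> K = {0}}"
    by (meson equals0I)
  then show ?thesis by (intro exI[of _ W]) simp
qed

lemma hypsD: "G \<in> hyps U \<Longrightarrow> vec.subspace G \<and> vec.dim G = 6 \<and> U \<subseteq> G"
  unfolding hyps_def by simp

lemma hypsI: "vec.subspace G \<Longrightarrow> vec.dim G = 6 \<Longrightarrow> U \<subseteq> G \<Longrightarrow> G \<in> hyps U"
  unfolding hyps_def by simp

lemma some_bex: "\<exists>x\<in>A. P x \<Longrightarrow> (SOME x. x \<in> A \<and> P x) \<in> A \<and> P (SOME x. x \<in> A \<and> P x)"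
  unfolding Bex_def by (rule someI_ex)

lemma sum_le_const: "(\<And>x. x \<in> A \<Longrightarrow> f x \<le> (K::nat)) \<Longrightarrow> sum f A \<le> card A * K"
  using sum_bounded_above[of A f K] by simp

lemma L1_caseB:
  fixes SS :: "('a::{field,finite}^7) set set"
  assumes sol: "\<forall>T\<in>SS. vec.subspace T \<and> vec.dim T = 4"
    and meet: "\<forall>T\<in>SS. \<forall>T'\<in>SS. \<exists>G. G \<in> hyps T \<and> T' \<subseteq> G"
    and nc: "\<forall>H. vec.subspace H \<and> vec.dim H = 6 \<longrightarrow> (\<exists>T\<in>SS. \<not> T \<subseteq> H)"
    and notA: "\<forall>L. vec.subspace L \<and> vec.dim L = 5 \<longrightarrow> (\<exists>T\<in>SS. \<forall>G\<in>hyps L. \<not> T \<subseteq> G)"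
    and A: "A \<in> SS"
  shows "card SS \<le> (CARD('a)^2+CARD('a)+1)*(CARD('a)^2+CARD('a)+1)*(CARD('a)^2+CARD('a)+1)"
proof -
  let ?t = "CARD('a)^2+CARD('a)+1"
  define CX where "CX X = (SOME T. T \<in> SS \<and> \<not> T \<subseteq> X)" for X :: "('a^7) set"
  have CX: "CX X \<in> SS \<and> \<not> CX X \<subseteq> X" if "X \<in> hyps A" for X
  proof -
    have h: "vec.subspace X \<and> vec.dim X = 6" using hypsD[OF that] by simp
    have "\<exists>T\<in>SS. \<not> T \<subseteq> X" using mp[OF spec[OF nc, of X] h] .
    then show ?thesis unfolding CX_def by (rule some_bex)
  qed
  define C2 where "C2 L = (SOME T. T \<in> SS \<and> (\<forall>G\<in>hyps L. \<not> T \<subseteq> G))" for L :: "('a^7) set"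
  have C2: "C2 L \<in> SS \<and> (\<forall>G\<in>hyps L. \<not> C2 L \<subseteq> G)" if "vec.subspace L" "vec.dim L = 5" for L
  proof -
    have h: "vec.subspace L \<and> vec.dim L = 5" using that by simp
    have "\<exists>T\<in>SS. \<forall>G\<in>hyps L. \<not> T \<subseteq> G" using mp[OF spec[OF notA, of L] h] .
    then show ?thesis unfolding C2_def by (rule some_bex)
  qed
  have XZ: "vec.subspace (X \<inter> Z) \<and> vec.dim (X \<inter> Z) = 5" if "X \<in> hyps A" "Z \<in> hyps (CX X)" for X Z
  proof -
    have sX: "vec.subspace X" "vec.dim X = 6" using hypsD[OF that(1)] by auto
    have sZ: "vec.subspace Z" "vec.dim Z = 6" "CX X \<subseteq> Z" using hypsD[OF that(2)] by auto
    have "X \<noteq> Z"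
    proof
      assume "X = Z" then show False using CX[OF that(1)] sZ(3) by simp
    qed
    then show ?thesis using two_hyps[OF sX sZ(1,2)] vec.subspace_inter[OF sX(1) sZ(1)] by simp
  qed
  define Sig where "Sig = (SIGMA X:hyps A. SIGMA Z:hyps (CX X). hyps (C2 (X \<inter> Z)))"
  have cover: "SS \<subseteq> (\<lambda>(X,Z,W). X \<inter> Z \<inter> W) ` Sig"
  proof
    fix T assume T: "T \<in> SS"
    obtain X where X: "X \<in> hyps A" "T \<subseteq> X" using bspec[OF bspec[OF meet A] T] by metis
    obtain Z where Z: "Z \<in> hyps (CX X)" "T \<subseteq> Z" using bspec[OF bspec[OF meet conjunct1[OF CX[OF X(1)]]] T] by metis
    have L: "vec.subspace (X \<inter> Z)" "vec.dim (X \<inter> Z) = 5" using XZ[OF X(1) Z(1)] by auto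
    obtain W where W: "W \<in> hyps (C2 (X \<inter> Z))" "T \<subseteq> W" using bspec[OF bspec[OF meet conjunct1[OF C2[OF L]]] T] by metis
    have nW: "\<not> X \<inter> Z \<subseteq> W"
    proof
      assume "X \<inter> Z \<subseteq> W"
      then have "W \<in> hyps (X \<inter> Z)" using hypsD[OF W(1)] by (auto intro: hypsI)
      then show False using conjunct2[OF C2[OF L]] hypsD[OF W(1)] by metis
    qed
    have sW: "vec.subspace W" "vec.dim W = 6" using hypsD[OF W(1)] by auto
    have d: "vec.dim (W \<inter> (X \<inter> Z)) = 4" using inter_hyp[OF sW L(1) nW] L(2) by simp
    have sT: "vec.subspace T" "vec.dim T = 4" using sol T by auto
    have sI: "vec.subspace (W \<inter> (X \<inter> Z))" using vec.subspace_inter[OF sW(1) L(1)] .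
    have "T \<subseteq> W \<inter> (X \<inter> Z)" using X(2) Z(2) W(2) by (simp add: Int_greatest)
    then have "T = W \<inter> (X \<inter> Z)"
      using eq_by_dim[OF sT(1) sI] d sT(2) by simp
    then have "T = X \<inter> Z \<inter> W" by (simp add: Int_ac)
    moreover have "(X, Z, W) \<in> Sig" unfolding Sig_def using X Z W by auto
    ultimately show "T \<in> (\<lambda>(X,Z,W). X \<inter> Z \<inter> W) ` Sig" by (auto intro!: rev_image_eqI[of "(X,Z,W)"])
  qed
  have "card SS \<le> card ((\<lambda>(X,Z,W). X \<inter> Z \<inter> W) ` Sig)" by (rule card_mono[OF _ cover]) simp
  also have "\<dots> \<le> card Sig" by (rule card_image_le) simp
  also have "card Sig = (\<Sum>X\<in>hyps A. \<Sum>Z\<in>hyps (CX X). card (hyps (C2 (X \<inter> Z))))"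
    unfolding Sig_def by (simp add: card_SigmaI)
  also have "\<dots> \<le> (\<Sum>X\<in>hyps A. \<Sum>Z\<in>hyps (CX X). ?t)"
  proof (intro sum_mono)
    fix X Z assume "X \<in> hyps A" "Z \<in> hyps (CX X)"
    then have L: "vec.subspace (X \<inter> Z)" "vec.dim (X \<inter> Z) = 5" using XZ by auto
    have "C2 (X \<inter> Z) \<in> SS" using C2[OF L] by simp
    then show "card (hyps (C2 (X \<inter> Z))) \<le> ?t" using card_hyps4[of "C2 (X \<inter> Z)"] sol by simp
  qed
  also have "\<dots> = (\<Sum>X\<in>hyps A. card (hyps (CX X)) * ?t)" by simp
  also have "\<dots> \<le> (\<Sum>X\<in>hyps A. ?t * ?t)"
  proof (intro sum_mono)
    fix X assume "X \<in> hyps A"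
    then have "CX X \<in> SS" using CX by simp
    then have "card (hyps (CX X)) \<le> ?t" using card_hyps4[of "CX X"] sol by simp
    then show "card (hyps (CX X)) * ?t \<le> ?t * ?t" by (rule mult_right_mono) simp
  qed
  also have "\<dots> = card (hyps A) * (?t * ?t)" by simp
  also have "\<dots> \<le> ?t * (?t * ?t)" using card_hyps4[of A] sol A by (intro mult_right_mono) simp_all
  finally show ?thesis by (simp only: mult.assoc)
qed

lemma hyp_meet5:
  fixes G G' K :: "('a::field^7) set"
  assumes "G \<in> hyps U" "G' \<in> hyps U'" "G \<noteq> G'"
  shows "vec.subspace (G \<inter> G') \<and> vec.dim (G \<inter> G') = 5"
proof -
  have a: "vec.subspace G" "vec.dim G = 6" using hypsD[OF assms(1)] by auto
  have b: "vec.subspace G'" "vec.dim G' = 6" using hypsD[OF assms(2)] by auto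
  show ?thesis using two_hyps[OF a b assms(3)] vec.subspace_inter[OF a(1) b(1)] by simp
qed

lemma hyp_meet_eq:
  fixes G G' K :: "('a::field^7) set"
  assumes "G \<in> hyps U" "G' \<in> hyps U'" "G \<noteq> G'" "vec.subspace K" "vec.dim K = 5" "K \<subseteq> G \<inter> G'"
  shows "K = G \<inter> G'"
  using eq_by_dim[OF assms(4) conjunct1[OF hyp_meet5[OF assms(1-3)]] assms(6)] hyp_meet5[OF assms(1-3)] assms(5)
  by simp

lemma L1_caseA2:
  fixes SS :: "('a::{field,finite}^7) set set"
  assumes sol: "\<forall>T\<in>SS. vec.subspace T \<and> vec.dim T = 4"
    and meet: "\<forall>T\<in>SS. \<forall>T'\<in>SS. \<exists>G. G \<in> hyps T \<and> T' \<subseteq> G"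
    and X: "vec.subspace X" "vec.dim X = 6"
    and Y0: "Y0 \<in> SS" "\<not> Y0 \<subseteq> X"
    and all: "\<forall>Y\<in>SS. \<not> Y \<subseteq> X \<longrightarrow> X \<inter> Y0 \<subseteq> Y"
  shows "card SS \<le> (CARD('a)^2+CARD('a)+1)*(CARD('a)^4+CARD('a)^3+CARD('a)^2+CARD('a)+1)
                    + (CARD('a)^3+CARD('a)^2+CARD('a)+1)"
proof -
  let ?t = "CARD('a)^2+CARD('a)+1"
  let ?f = "CARD('a)^4+CARD('a)^3+CARD('a)^2+CARD('a)+1"
  let ?g = "CARD('a)^3+CARD('a)^2+CARD('a)+1"
  have sY0: "vec.subspace Y0" "vec.dim Y0 = 4" using sol Y0 by auto
  have R: "vec.subspace (X \<inter> Y0)" "vec.dim (X \<inter> Y0) = 3"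
    using inter_hyp[OF X sY0(1) Y0(2)] sY0(2) vec.subspace_inter[OF X(1) sY0(1)] by auto
  let ?U = "(\<Union>Z\<in>hyps Y0. {T. vec.subspace T \<and> vec.dim T = 4 \<and> T \<subseteq> X \<inter> Z})"
  let ?V = "{T. vec.subspace T \<and> vec.dim T = 4 \<and> X \<inter> Y0 \<subseteq> T}"
  have cover: "SS \<subseteq> ?U \<union> ?V"
  proof
    fix T assume T: "T \<in> SS"
    have sT: "vec.subspace T" "vec.dim T = 4" using sol T by auto
    show "T \<in> ?U \<union> ?V"
    proof (cases "T \<subseteq> X")
      case True
      obtain Z where Z: "Z \<in> hyps Y0" "T \<subseteq> Z" using bspec[OF bspec[OF meet Y0(1)] T] by metis
      have "T \<subseteq> X \<inter> Z" using True Z(2) by (simp add: Int_greatest)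
      then have "T \<in> {T. vec.subspace T \<and> vec.dim T = 4 \<and> T \<subseteq> X \<inter> Z}" using sT by simp
      then show ?thesis using Z(1) by blast
    next
      case False
      then have "X \<inter> Y0 \<subseteq> T" using all T by simp
      then show ?thesis using sT by simp
    qed
  qed
  have cU: "card {T. vec.subspace T \<and> vec.dim T = 4 \<and> T \<subseteq> X \<inter> Z} \<le> ?f" if Z: "Z \<in> hyps Y0" for Z
  proof -
    have "X \<noteq> Z"
    proof
      assume "X = Z" then show False using hypsD[OF Z] Y0(2) by simp
    qed
    have XX: "X \<in> hyps {}" using X by (simp add: hypsI)
    have "vec.subspace (X \<inter> Z) \<and> vec.dim (X \<inter> Z) = 5" by (rule hyp_meet5[OF XX Z \<open>X \<noteq> Z\<close>])
    then show ?thesis using card_solids_in5[of "X \<inter> Z"] by simp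
  qed
  have "card SS \<le> card (?U \<union> ?V)" by (rule card_mono[OF _ cover]) simp
  also have "\<dots> \<le> card ?U + card ?V" by (rule card_Un_le)
  also have "card ?U \<le> (\<Sum>Z\<in>hyps Y0. card {T. vec.subspace T \<and> vec.dim T = 4 \<and> T \<subseteq> X \<inter> Z})"
    by (rule card_UN_le) simp
  also have "\<dots> \<le> card (hyps Y0) * ?f" using cU by (rule sum_le_const)
  also have "\<dots> \<le> ?t * ?f" using card_hyps4[OF sY0] by (rule mult_right_mono) simp
  also have "card ?V \<le> ?g" using card_solids_over3[OF R] .
  finally show ?thesis by simp
qed

lemma L1_caseA1:
  fixes SS :: "('a::{field,finite}^7) set set"
  assumes sol: "\<forall>T\<in>SS. vec.subspace T \<and> vec.dim T = 4"
    and meet: "\<forall>T\<in>SS. \<forall>T'\<in>SS. \<exists>G. G \<in> hyps T \<and> T' \<subseteq> G"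
    and L: "vec.subspace L" "vec.dim L = 5"
    and cov: "\<forall>T\<in>SS. \<exists>G\<in>hyps L. T \<subseteq> G"
    and cas: "\<forall>X\<in>hyps L. \<exists>Y2\<in>SS. \<not> Y2 \<subseteq> X \<and> (\<exists>Y1\<in>SS. \<not> Y1 \<subseteq> X \<and> \<not> X \<inter> Y2 \<subseteq> Y1)"
  shows "card SS \<le> (CARD('a)^4+CARD('a)^3+CARD('a)^2+CARD('a)+1)
     + (CARD('a)+1)*((CARD('a)^2+CARD('a))*(CARD('a)^2+CARD('a)+1) + CARD('a)*(CARD('a)^4+CARD('a)^3+CARD('a)^2+CARD('a)+1))"
proof -
  let ?q = "CARD('a)"
  let ?t = "?q^2+?q+1"
  let ?f = "?q^4+?q^3+?q^2+?q+1"
  define Y2 where "Y2 X = (SOME Y2. Y2 \<in> SS \<and> (\<not> Y2 \<subseteq> X \<and> (\<exists>Y1\<in>SS. \<not> Y1 \<subseteq> X \<and> \<not> X \<inter> Y2 \<subseteq> Y1)))" for X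
  define Y1 where "Y1 X = (SOME Y1. Y1 \<in> SS \<and> (\<not> Y1 \<subseteq> X \<and> \<not> X \<inter> Y2 X \<subseteq> Y1))" for X
  have Y2: "Y2 X \<in> SS \<and> \<not> Y2 X \<subseteq> X \<and> (\<exists>Y1\<in>SS. \<not> Y1 \<subseteq> X \<and> \<not> X \<inter> Y2 X \<subseteq> Y1)" if "X \<in> hyps L" for X
    unfolding Y2_def by (rule some_bex) (rule bspec[OF cas that])
  have Y1: "Y1 X \<in> SS \<and> \<not> Y1 X \<subseteq> X \<and> \<not> X \<inter> Y2 X \<subseteq> Y1 X" if "X \<in> hyps L" for X
    unfolding Y1_def by (rule some_bex) (use Y2[OF that] in simp)
  define Q where "Q X = vec.span (Y1 X \<union> (X \<inter> Y2 X))" for X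
  define Zs where "Zs X = hyps (Y1 X) - hyps L" for X
  define Set1 where "Set1 X = (\<lambda>(Z,W). X \<inter> Z \<inter> W) ` (SIGMA Z:Zs X. hyps (Y2 X))" for X
  define Set2 where "Set2 X = (\<Union>Z\<in>hyps (Q X) - hyps L. {T. vec.subspace T \<and> vec.dim T = 4 \<and> T \<subseteq> X \<inter> Z})" for X
  have XhD: "vec.subspace X \<and> vec.dim X = 6 \<and> L \<subseteq> X" if "X \<in> hyps L" for X using hypsD[OF that] .
  have covD: "\<exists>G. G \<in> hyps L \<and> T \<subseteq> G" if "T \<in> SS" for T using bspec[OF cov that] by blast
  have meetD: "\<exists>G. G \<in> hyps T \<and> T' \<subseteq> G" if "T \<in> SS" "T' \<in> SS" for T T'
    using bspec[OF bspec[OF meet that(1)] that(2)] .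
  have XY2L: "X \<inter> Y2 X \<subseteq> L" if X: "X \<in> hyps L" for X
  proof -
    obtain G where G: "G \<in> hyps L" "Y2 X \<subseteq> G" using covD[of "Y2 X"] Y2[OF X] by blast
    have "G \<noteq> X"
    proof
      assume "G = X" then show False using G(2) Y2[OF X] by simp
    qed
    have "L \<subseteq> X \<inter> G" using XhD[OF X] hypsD[OF G(1)] by simp
    then have "L = X \<inter> G" using hyp_meet_eq[OF X G(1) \<open>G \<noteq> X\<close>[symmetric] L] by simp
    then show ?thesis using G(2) by blast
  qed
  have cZs: "card (Zs X) \<le> ?q^2 + ?q" if X: "X \<in> hyps L" for X
  proof -
    have sY1: "vec.subspace (Y1 X)" "vec.dim (Y1 X) = 4" using sol Y1[OF X] by auto
    obtain G where G: "G \<in> hyps L" "Y1 X \<subseteq> G" using covD[of "Y1 X"] Y1[OF X] by blast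
    have "G \<in> hyps (Y1 X) \<inter> hyps L" using G hypsD[OF G(1)] by (simp add: hypsI)
    then have "1 \<le> card (hyps (Y1 X) \<inter> hyps L)" by (metis card_0_eq empty_iff finite less_one not_le)
    moreover have "card (Zs X) = card (hyps (Y1 X)) - card (hyps (Y1 X) \<inter> hyps L)"
      unfolding Zs_def by (rule card_Diff_subset_Int) simp
    moreover have "card (hyps (Y1 X)) \<le> ?t" by (rule card_hyps4[OF sY1])
    ultimately show ?thesis by linarith
  qed
  have cQ: "card (hyps (Q X) - hyps L) \<le> ?q" if X: "X \<in> hyps L" for X
  proof -
    have sY1: "vec.subspace (Y1 X)" "vec.dim (Y1 X) = 4" using sol Y1[OF X] by auto
    have "vec.span (Y1 X) \<subset> vec.span (Y1 X \<union> (X \<inter> Y2 X))"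
    proof
      show "vec.span (Y1 X) \<subseteq> vec.span (Y1 X \<union> (X \<inter> Y2 X))" by (rule vec.span_mono) blast
      have e: "vec.span (Y1 X) = Y1 X" using sY1(1) by simp
      show "vec.span (Y1 X) \<noteq> vec.span (Y1 X \<union> (X \<inter> Y2 X))"
        using Y1[OF X] vec.span_superset[of "Y1 X \<union> (X \<inter> Y2 X)"] unfolding e by blast
    qed
    then have "vec.dim (Y1 X) < vec.dim (Y1 X \<union> (X \<inter> Y2 X))" by (rule vec.dim_psubset)
    then have d5: "5 \<le> vec.dim (Q X)" unfolding Q_def using sY1(2) by simp
    obtain G where G: "G \<in> hyps L" "Y1 X \<subseteq> G" using covD[of "Y1 X"] Y1[OF X] by blast
    have "X \<inter> Y2 X \<subseteq> G" using XY2L[OF X] hypsD[OF G(1)] by blast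
    then have "Q X \<subseteq> G" unfolding Q_def using G(2) hypsD[OF G(1)] by (intro vec.span_minimal) auto
    then have "G \<in> hyps (Q X) \<inter> hyps L" using G hypsD[OF G(1)] by (simp add: hypsI)
    then have "1 \<le> card (hyps (Q X) \<inter> hyps L)" by (metis card_0_eq empty_iff finite less_one not_le)
    moreover have "card (hyps (Q X) - hyps L) = card (hyps (Q X)) - card (hyps (Q X) \<inter> hyps L)"
      by (rule card_Diff_subset_Int) simp
    moreover have "card (hyps (Q X)) \<le> ?q + 1" by (rule card_hyps_ge5[OF d5])
    ultimately show ?thesis by linarith
  qed
  have cSet1: "card (Set1 X) \<le> (?q^2+?q) * ?t" if X: "X \<in> hyps L" for X
  proof -
    have sY2: "vec.subspace (Y2 X)" "vec.dim (Y2 X) = 4" using sol Y2[OF X] by auto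
    have "card (Set1 X) \<le> card (SIGMA Z:Zs X. hyps (Y2 X))" unfolding Set1_def by (rule card_image_le) simp
    also have "\<dots> = card (Zs X) * card (hyps (Y2 X))" by (simp add: card_SigmaI)
    also have "\<dots> \<le> (?q^2+?q) * ?t" using cZs[OF X] card_hyps4[OF sY2] by (rule mult_le_mono)
    finally show ?thesis .
  qed
  have cSet2: "card (Set2 X) \<le> ?q * ?f" if X: "X \<in> hyps L" for X
  proof -
    have "card (Set2 X) \<le> (\<Sum>Z\<in>hyps (Q X) - hyps L. card {T. vec.subspace T \<and> vec.dim T = 4 \<and> T \<subseteq> X \<inter> Z})"
      unfolding Set2_def by (rule card_UN_le) simp
    also have "\<dots> \<le> card (hyps (Q X) - hyps L) * ?f"
    proof (rule sum_le_const)
      fix Z assume Z: "Z \<in> hyps (Q X) - hyps L"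
      have "Y1 X \<subseteq> Q X" unfolding Q_def using vec.span_superset by blast
      then have "Y1 X \<subseteq> Z" using hypsD[of Z "Q X"] Z by blast
      then have "X \<noteq> Z" using Y1[OF X] by blast
      have "vec.subspace (X \<inter> Z) \<and> vec.dim (X \<inter> Z) = 5"
        using hyp_meet5[OF X _ \<open>X \<noteq> Z\<close>] Z by blast
      then show "card {T. vec.subspace T \<and> vec.dim T = 4 \<and> T \<subseteq> X \<inter> Z} \<le> ?f"
        using card_solids_in5[of "X \<inter> Z"] by simp
    qed
    also have "\<dots> \<le> ?q * ?f" using cQ[OF X] by (rule mult_right_mono) simp
    finally show ?thesis .
  qed
  let ?B = "{T. vec.subspace T \<and> vec.dim T = 4 \<and> T \<subseteq> L}"
  have cover: "SS \<subseteq> ?B \<union> (\<Union>X\<in>hyps L. Set1 X \<union> Set2 X)"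
  proof
    fix T assume T: "T \<in> SS"
    have sT: "vec.subspace T" "vec.dim T = 4" using sol T by auto
    show "T \<in> ?B \<union> (\<Union>X\<in>hyps L. Set1 X \<union> Set2 X)"
    proof (cases "T \<subseteq> L")
      case True then show ?thesis using sT by simp
    next
      case notL: False
      obtain X where X: "X \<in> hyps L" "T \<subseteq> X" using covD[OF T] by blast
      obtain Z where Z: "Z \<in> hyps (Y1 X)" "T \<subseteq> Z" using meetD[of "Y1 X" T] Y1[OF X(1)] T by blast
      have "X \<noteq> Z"
      proof
        assume "X = Z" then show False using hypsD[OF Z(1)] Y1[OF X(1)] by simp
      qed
      have ZL: "Z \<notin> hyps L"
      proof
        assume ZL: "Z \<in> hyps L"
        have "L \<subseteq> X \<inter> Z" using XhD[OF X(1)] hypsD[OF ZL] by simp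
        then have "L = X \<inter> Z" using hyp_meet_eq[OF X(1) ZL \<open>X \<noteq> Z\<close> L] by simp
        then show False using notL X(2) Z(2) by blast
      qed
      have Lam: "vec.subspace (X \<inter> Z)" "vec.dim (X \<inter> Z) = 5" using hyp_meet5[OF X(1) Z(1) \<open>X \<noteq> Z\<close>] by auto
      have TXZ: "T \<subseteq> X \<inter> Z" using X(2) Z(2) by (simp add: Int_greatest)
      show ?thesis
      proof (cases "\<exists>G\<in>hyps (X \<inter> Z). Y2 X \<subseteq> G")
        case True
        then obtain G where G: "G \<in> hyps (X \<inter> Z)" "Y2 X \<subseteq> G" by blast
        have "G \<noteq> X"
        proof
          assume "G = X" then show False using G(2) Y2[OF X(1)] by simp
        qed
        have "X \<inter> Z \<subseteq> X \<inter> G" using hypsD[OF G(1)] by blast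
        then have "X \<inter> Z = X \<inter> G" using hyp_meet_eq[OF X(1) G(1) \<open>G \<noteq> X\<close>[symmetric] Lam] by simp
        then have "X \<inter> Y2 X \<subseteq> Z" using G(2) by blast
        moreover have "Y1 X \<subseteq> Z" using hypsD[OF Z(1)] by simp
        ultimately have "Q X \<subseteq> Z" unfolding Q_def using hypsD[OF Z(1)] by (intro vec.span_minimal) auto
        then have "Z \<in> hyps (Q X) - hyps L" using ZL hypsD[OF Z(1)] by (simp add: hypsI)
        then have "T \<in> Set2 X" unfolding Set2_def using sT TXZ by blast
        then show ?thesis using X(1) by blast
      next
        case False
        obtain W where W: "W \<in> hyps (Y2 X)" "T \<subseteq> W" using meetD[of "Y2 X" T] Y2[OF X(1)] T by blast
        have sW: "vec.subspace W" "vec.dim W = 6" using hypsD[OF W(1)] by auto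
        have nW: "\<not> X \<inter> Z \<subseteq> W"
        proof
          assume "X \<inter> Z \<subseteq> W"
          then have "W \<in> hyps (X \<inter> Z)" using sW by (simp add: hypsI)
          then show False using False hypsD[OF W(1)] by blast
        qed
        have d: "vec.dim (W \<inter> (X \<inter> Z)) = 4" using inter_hyp[OF sW Lam(1) nW] Lam(2) by simp
        have sI: "vec.subspace (W \<inter> (X \<inter> Z))" using vec.subspace_inter[OF sW(1) Lam(1)] .
        have "T \<subseteq> W \<inter> (X \<inter> Z)" using TXZ W(2) by (simp add: Int_greatest)
        then have "T = W \<inter> (X \<inter> Z)" using eq_by_dim[OF sT(1) sI] d sT(2) by simp
        then have "T = X \<inter> Z \<inter> W" by (simp add: Int_ac)
        moreover have "(Z, W) \<in> (SIGMA Z:Zs X. hyps (Y2 X))" unfolding Zs_def using Z(1) ZL W(1) by simp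
        ultimately have "T \<in> Set1 X" unfolding Set1_def by (auto intro!: rev_image_eqI[of "(Z,W)"])
        then show ?thesis using X(1) by blast
      qed
    qed
  qed
  have "card SS \<le> card (?B \<union> (\<Union>X\<in>hyps L. Set1 X \<union> Set2 X))" by (rule card_mono[OF _ cover]) simp
  also have "\<dots> \<le> card ?B + card (\<Union>X\<in>hyps L. Set1 X \<union> Set2 X)" by (rule card_Un_le)
  also have "card ?B \<le> ?f" using card_solids_in5[OF L] .
  also have "card (\<Union>X\<in>hyps L. Set1 X \<union> Set2 X) \<le> (\<Sum>X\<in>hyps L. card (Set1 X \<union> Set2 X))"
    by (rule card_UN_le) simp
  also have "\<dots> \<le> card (hyps L) * ((?q^2+?q) * ?t + ?q * ?f)"
  proof (rule sum_le_const)
    fix X assume X: "X \<in> hyps L"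
    have "card (Set1 X \<union> Set2 X) \<le> card (Set1 X) + card (Set2 X)" by (rule card_Un_le)
    then show "card (Set1 X \<union> Set2 X) \<le> (?q^2+?q) * ?t + ?q * ?f" using cSet1[OF X] cSet2[OF X] by linarith
  qed
  also have "\<dots> \<le> (?q + 1) * ((?q^2+?q) * ?t + ?q * ?f)" using card_hyps5[OF L] by (rule mult_right_mono) simp
  finally show ?thesis by simp
qed

lemma L1:
  fixes SS :: "('a::{field,finite}^7) set set"
  assumes sol: "\<forall>T\<in>SS. vec.subspace T \<and> vec.dim T = 4"
    and meet: "\<forall>T\<in>SS. \<forall>T'\<in>SS. \<exists>G. G \<in> hyps T \<and> T' \<subseteq> G"
    and big: "CARD('a)^7 + 2*CARD('a)^6 + 2*CARD('a)^5 + 3*CARD('a)^4 + 2*CARD('a)^3 + 2*CARD('a)^2 + CARD('a) + 1 < card SS"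
  shows "\<exists>H. vec.subspace H \<and> vec.dim H = 6 \<and> (\<forall>T\<in>SS. T \<subseteq> H)"
proof (rule ccontr)
  let ?q = "CARD('a)"
  assume "\<not> ?thesis"
  then have nc: "\<forall>H. vec.subspace H \<and> vec.dim H = 6 \<longrightarrow> (\<exists>T\<in>SS. \<not> T \<subseteq> H)" by metis
  have q2: "2 \<le> ?q" by (rule card_field_ge2)
  have "SS \<noteq> {}" using big by auto
  then obtain A where A: "A \<in> SS" by blast
  show False
  proof (cases "\<exists>L. vec.subspace L \<and> vec.dim L = 5 \<and> (\<forall>T\<in>SS. \<exists>G\<in>hyps L. T \<subseteq> G)")
    case False
    then have notA: "\<forall>L. vec.subspace L \<and> vec.dim L = 5 \<longrightarrow> (\<exists>T\<in>SS. \<forall>G\<in>hyps L. \<not> T \<subseteq> G)" by metis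
    have "card SS \<le> (?q^2+?q+1)*(?q^2+?q+1)*(?q^2+?q+1)" by (rule L1_caseB[OF sol meet nc notA A])
    then show False using ineq1[OF q2] big by linarith
  next
    case True
    then obtain L where L: "vec.subspace L" "vec.dim L = 5" and cov: "\<forall>T\<in>SS. \<exists>G\<in>hyps L. T \<subseteq> G" by blast
    show False
    proof (cases "\<exists>X\<in>hyps L. \<exists>Y0\<in>SS. \<not> Y0 \<subseteq> X \<and> (\<forall>Y\<in>SS. \<not> Y \<subseteq> X \<longrightarrow> X \<inter> Y0 \<subseteq> Y)")
      case True
      then obtain X Y0 where X: "X \<in> hyps L" and Y0: "Y0 \<in> SS" "\<not> Y0 \<subseteq> X"
        and all: "\<forall>Y\<in>SS. \<not> Y \<subseteq> X \<longrightarrow> X \<inter> Y0 \<subseteq> Y" by metis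
      have sX: "vec.subspace X" "vec.dim X = 6" using hypsD[OF X] by auto
      have "card SS \<le> (?q^2+?q+1)*(?q^4+?q^3+?q^2+?q+1) + (?q^3+?q^2+?q+1)"
        by (rule L1_caseA2[OF sol meet sX Y0 all])
      then show False using ineq2[OF q2] big by linarith
    next
      case False
      have cas: "\<forall>X\<in>hyps L. \<exists>Y2\<in>SS. \<not> Y2 \<subseteq> X \<and> (\<exists>Y1\<in>SS. \<not> Y1 \<subseteq> X \<and> \<not> X \<inter> Y2 \<subseteq> Y1)"
      proof
        fix X assume X: "X \<in> hyps L"
        have sX: "vec.subspace X \<and> vec.dim X = 6" using hypsD[OF X] by auto
        obtain Y2 where Y2: "Y2 \<in> SS" "\<not> Y2 \<subseteq> X" using mp[OF spec[OF nc, of X] sX] by metis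
        have "\<not> (\<forall>Y\<in>SS. \<not> Y \<subseteq> X \<longrightarrow> X \<inter> Y2 \<subseteq> Y)" using False X Y2 by metis
        then obtain Y1 where "Y1 \<in> SS" "\<not> Y1 \<subseteq> X" "\<not> X \<inter> Y2 \<subseteq> Y1" by metis
        then show "\<exists>Y2\<in>SS. \<not> Y2 \<subseteq> X \<and> (\<exists>Y1\<in>SS. \<not> Y1 \<subseteq> X \<and> \<not> X \<inter> Y2 \<subseteq> Y1)" using Y2 by metis
      qed
      have "card SS \<le> (?q^4+?q^3+?q^2+?q+1) + (?q+1)*((?q^2+?q)*(?q^2+?q+1) + ?q*(?q^4+?q^3+?q^2+?q+1))"
        by (rule L1_caseA1[OF sol meet L cov cas])
      then show False using ineq3[OF q2] big by linarith
    qed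
  qed
qed

lemma ne0_mono:
  fixes X Y :: "('a::field^'n) set"
  shows "X \<subseteq> Y \<Longrightarrow> 0 \<in> X \<Longrightarrow> X \<noteq> {0} \<Longrightarrow> Y \<noteq> {0}"
  by blast

lemma inter_ne0:
  fixes S T :: "('a::field^'n) set"
  assumes "vec.subspace S" "vec.subspace T" "1 \<le> vec.dim (S \<inter> T)"
  shows "S \<inter> T \<noteq> {0}"
  using nonzero_of_dim[OF vec.subspace_inter[OF assms(1,2)] assms(3)] .

lemma sat_meet:
  fixes C :: "(('a::{field,finite} ^ 7) set \<times> ('a ^ 7) set) set"
  assumes ind: "flag_independent C"
    and T: "solid T" "saturated C T" and T': "solid T'" "saturated C T'"
  shows "2 \<le> vec.dim (T \<inter> T')"
proof (rule ccontr)
  assume "\<not> 2 \<le> vec.dim (T \<inter> T')"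
  then have d: "vec.dim (T \<inter> T') \<le> 1" by simp
  have sT: "vec.subspace T" "vec.dim T = 4" using T(1) by (simp_all add: proj_subspace_def)
  have sT': "vec.subspace T'" "vec.dim T' = 4" using T'(1) by (simp_all add: proj_subspace_def)
  have K: "vec.subspace (T \<inter> T')" using vec.subspace_inter[OF sT(1) sT'(1)] .
  obtain E where E: "vec.subspace E" "vec.dim E = 3" "E \<subseteq> T" "E \<inter> (T \<inter> T') = {0}"
    using plane_avoiding[OF sT K _ d] by blast
  have "T' \<inter> T = T \<inter> T'" by blast
  then obtain E' where E': "vec.subspace E'" "vec.dim E' = 3" "E' \<subseteq> T'" "E' \<inter> (T \<inter> T') = {0}"
    using plane_avoiding[OF sT' _ _ , of "T' \<inter> T"] vec.subspace_inter[OF sT'(1) sT(1)] d by auto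
  have inC: "(E, T) \<in> C" "(E', T') \<in> C"
    using T(2) T'(2) E E' unfolding saturated_def by (simp_all add: proj_subspace_def)
  have neq: "(E, T) \<noteq> (E', T')"
  proof
    assume "(E, T) = (E', T')"
    then have "T = T'" by simp
    then show False using d sT by simp
  qed
  have "E \<inter> T' = {0}" using E(3,4) by blast
  moreover have "E' \<inter> T = {0}" using E'(3,4) by blast
  ultimately have "flag_adj (E, T) (E', T')" using neq unfolding flag_adj_def proj_disjoint_def by simp
  then show False using ind inC unfolding flag_independent_def by blast
qed

lemma planes_in_H:
  fixes C :: "(('a::{field,finite} ^ 7) set \<times> ('a ^ 7) set) set"
  assumes ind: "flag_independent C"
    and H: "vec.subspace H" "vec.dim H = 6"
    and SSH: "\<forall>T\<in>{S. solid S \<and> saturated C S}. T \<subseteq> H"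
    and big: "CARD('a)^7 + 2*CARD('a)^6 + 2*CARD('a)^5 + 3*CARD('a)^4 + 2*CARD('a)^3 + 2*CARD('a)^2 + CARD('a) + 1
               < card {S. solid S \<and> saturated C S}"
    and F: "(E, S) \<in> C"
  shows "E \<subseteq> H"
proof (rule ccontr)
  assume nEH: "\<not> E \<subseteq> H"
  let ?SS = "{S. solid S \<and> saturated C S}"
  have fl: "flag23 (E, S)" using ind F unfolding flag_independent_def by blast
  have sE: "vec.subspace E" "vec.dim E = 3" and sS: "vec.subspace S" "vec.dim S = 4" and ES: "E \<subseteq> S"
    using fl unfolding flag23_def by (simp_all add: proj_subspace_def)
  have nSH: "\<not> S \<subseteq> H" using nEH ES by blast
  have l: "vec.subspace (H \<inter> E)" "vec.dim (H \<inter> E) = 2" "H \<inter> E \<subseteq> H"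
    using inter_hyp[OF H sE(1) nEH] sE(2) vec.subspace_inter[OF H(1) sE(1)] by auto
  have pi: "vec.subspace (H \<inter> S)" "vec.dim (H \<inter> S) = 3"
    using inter_hyp[OF H sS(1) nSH] sS(2) vec.subspace_inter[OF H(1) sS(1)] by auto
  let ?M = "{T. vec.subspace T \<and> vec.dim T = 4 \<and> T \<subseteq> H \<and> T \<inter> (H \<inter> E) \<noteq> {0}}"
  have cM: "card ?M \<le> CARD('a)^7 + 2*CARD('a)^6 + 2*CARD('a)^5 + 3*CARD('a)^4 + 2*CARD('a)^3 + 2*CARD('a)^2 + CARD('a) + 1"
    by (rule card_solids_meet_line[OF H l])
  have "\<not> ?SS \<subseteq> ?M"
  proof
    assume "?SS \<subseteq> ?M"
    then have "card ?SS \<le> card ?M" by (intro card_mono) simp_all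
    then show False using cM big by linarith
  qed
  then obtain T where T: "T \<in> ?SS" and TnM: "T \<notin> ?M" by blast
  have sT: "vec.subspace T" "vec.dim T = 4" using T by (simp_all add: proj_subspace_def)
  have TH: "T \<subseteq> H" using SSH T by blast
  have Tl: "T \<inter> (H \<inter> E) = {0}" using TnM sT TH by blast
  have ET: "E \<inter> T = {0}" using Tl TH vec.subspace_0[OF sE(1)] vec.subspace_0[OF sT(1)] by blast
  have dST: "vec.dim (S \<inter> T) \<le> 1"
  proof (rule ccontr)
    assume "\<not> vec.dim (S \<inter> T) \<le> 1"
    then have d2: "2 \<le> vec.dim ((H \<inter> S) \<inter> T)"
    proof -
      have "S \<inter> T = (H \<inter> S) \<inter> T" using TH by blast
      then show ?thesis using \<open>\<not> vec.dim (S \<inter> T) \<le> 1\<close> by simp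
    qed
    have sub1: "(H \<inter> S) \<inter> T \<subseteq> H \<inter> S" by blast
    have sub2: "H \<inter> E \<subseteq> H \<inter> S" using ES by blast
    have sI: "vec.subspace ((H \<inter> S) \<inter> T)" using vec.subspace_inter[OF pi(1) sT(1)] .
    have "vec.dim ((H \<inter> S) \<inter> T) + vec.dim (H \<inter> E) \<le> vec.dim (H \<inter> S) + vec.dim (((H \<inter> S) \<inter> T) \<inter> (H \<inter> E))"
      by (rule dim_inter_ge_in[OF sI l(1) pi(1) sub1 sub2])
    then have "1 \<le> vec.dim (((H \<inter> S) \<inter> T) \<inter> (H \<inter> E))" using d2 l(2) pi(2) by linarith
    then have "((H \<inter> S) \<inter> T) \<inter> (H \<inter> E) \<noteq> {0}" using inter_ne0[OF sI l(1)] by blast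
    moreover have "0 \<in> ((H \<inter> S) \<inter> T) \<inter> (H \<inter> E)"
      using vec.subspace_0[OF sI] vec.subspace_0[OF l(1)] by blast
    ultimately have "T \<inter> (H \<inter> E) \<noteq> {0}" by blast
    then show False using Tl by simp
  qed
  have K: "vec.subspace (S \<inter> T)" "S \<inter> T \<subseteq> T" using vec.subspace_inter[OF sS(1) sT(1)] by auto
  obtain E' where E': "vec.subspace E'" "vec.dim E' = 3" "E' \<subseteq> T" "E' \<inter> (S \<inter> T) = {0}"
    using plane_avoiding[OF sT K dST] by blast
  have inC: "(E', T) \<in> C" using T E' unfolding saturated_def by (simp add: proj_subspace_def)
  have neq: "(E, S) \<noteq> (E', T)"
  proof
    assume "(E, S) = (E', T)"
    then have "E \<subseteq> T" using E'(3) by simp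
    then have "E = {0}" using ET by blast
    then show False using sE(2) by simp
  qed
  have "E' \<inter> S = {0}" using E'(3,4) by blast
  then have "flag_adj (E, S) (E', T)" using neq ET unfolding flag_adj_def proj_disjoint_def by simp
  then show False using ind F inC unfolding flag_independent_def by blast
qed

lemma Lambda_independent:
  fixes H :: "('a::{field,finite} ^ 7) set"
  assumes H: "vec.subspace H" "vec.dim H = 6" and Ei: "plane_independent_in H \<E>"
  shows "flag_independent (Lambda H \<E>)"
  unfolding flag_independent_def
proof (intro conjI ballI)
  fix F assume "F \<in> Lambda H \<E>" then show "flag23 F" unfolding Lambda_def by simp
next
  fix F G assume F: "F \<in> Lambda H \<E>" and G: "G \<in> Lambda H \<E>"
  obtain E S where FES: "F = (E, S)" by (cases F)
  obtain E' S' where GES: "G = (E', S')" by (cases G)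
  have fF: "flag23 (E, S)" "S \<subseteq> H \<or> E \<in> \<E>" using F FES unfolding Lambda_def by auto
  have fG: "flag23 (E', S')" "S' \<subseteq> H \<or> E' \<in> \<E>" using G GES unfolding Lambda_def by auto
  have sE: "vec.subspace E" "vec.dim E = 3" and sS: "vec.subspace S" "vec.dim S = 4" and ES: "E \<subseteq> S"
    using fF(1) unfolding flag23_def by (simp_all add: proj_subspace_def)
  have sE': "vec.subspace E'" "vec.dim E'= 3" and sS': "vec.subspace S'" "vec.dim S' = 4" and ES': "E' \<subseteq> S'"
    using fG(1) unfolding flag23_def by (simp_all add: proj_subspace_def)
  have EH: "E \<in> \<E> \<Longrightarrow> E \<subseteq> H" and EH': "E' \<in> \<E> \<Longrightarrow> E' \<subseteq> H"
    using Ei unfolding plane_independent_in_def by auto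
  have "E \<inter> S' \<noteq> {0} \<or> E' \<inter> S \<noteq> {0}"
  proof (cases "S \<subseteq> H")
    case SH: True
    show ?thesis
    proof (cases "S' \<subseteq> H")
      case True
      have sI: "vec.subspace (S \<inter> S')" using vec.subspace_inter[OF sS(1) sS'(1)] .
      have "vec.dim S + vec.dim S' \<le> vec.dim H + vec.dim (S \<inter> S')"
        by (rule dim_inter_ge_in[OF sS(1) sS'(1) H(1) SH True])
      then have d2: "2 \<le> vec.dim (S \<inter> S')" using sS sS' H by simp
      have "vec.dim E + vec.dim (S \<inter> S') \<le> vec.dim S + vec.dim (E \<inter> (S \<inter> S'))"
        by (rule dim_inter_ge_in[OF sE(1) sI sS(1) ES]) blast
      then have "1 \<le> vec.dim (E \<inter> (S \<inter> S'))" using d2 sE sS by simp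
      then have "E \<inter> (S \<inter> S') \<noteq> {0}" using inter_ne0[OF sE(1) sI] by blast
      moreover have "0 \<in> E \<inter> (S \<inter> S')" using vec.subspace_0[OF sE(1)] vec.subspace_0[OF sI] by blast
      ultimately have "E \<inter> S' \<noteq> {0}" by blast
      then show ?thesis by simp
    next
      case False
      then have "E' \<in> \<E>" using fG(2) by simp
      then have "E' \<subseteq> H" using EH' by simp
      have "vec.dim E' + vec.dim S \<le> vec.dim H + vec.dim (E' \<inter> S)"
        by (rule dim_inter_ge_in[OF sE'(1) sS(1) H(1) \<open>E' \<subseteq> H\<close> SH])
      then have "1 \<le> vec.dim (E' \<inter> S)" using sE' sS H by simp
      then have "E' \<inter> S \<noteq> {0}" using inter_ne0[OF sE'(1) sS(1)] by blast
      then show ?thesis by simp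
    qed
  next
    case False
    then have "E \<in> \<E>" using fF(2) by simp
    then have EH0: "E \<subseteq> H" using EH by simp
    show ?thesis
    proof (cases "S' \<subseteq> H")
      case True
      have "vec.dim E + vec.dim S' \<le> vec.dim H + vec.dim (E \<inter> S')"
        by (rule dim_inter_ge_in[OF sE(1) sS'(1) H(1) EH0 True])
      then have "1 \<le> vec.dim (E \<inter> S')" using sE sS' H by simp
      then have "E \<inter> S' \<noteq> {0}" using inter_ne0[OF sE(1) sS'(1)] by blast
      then show ?thesis by simp
    next
      case False
      then have "E' \<in> \<E>" using fG(2) by simp
      then have "\<not> proj_disjoint E E'" using Ei \<open>E \<in> \<E>\<close> unfolding plane_independent_in_def by blast
      then have "E \<inter> E' \<noteq> {0}" unfolding proj_disjoint_def by simp
      moreover have "0 \<in> E \<inter> E'" using vec.subspace_0[OF sE(1)] vec.subspace_0[OF sE'(1)] by blast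
      ultimately have "E \<inter> S' \<noteq> {0}" using ES' by blast
      then show ?thesis by simp
    qed
  qed
  then show "\<not> flag_adj F G" unfolding flag_adj_def proj_disjoint_def FES GES by auto
qed

lemma max_extend:
  fixes H :: "('a::{field,finite} ^ 7) set"
  assumes "plane_independent_in H \<E>0"
  shows "\<exists>\<E>. \<E>0 \<subseteq> \<E> \<and> plane_max_independent_in H \<E>"
proof -
  let ?P = "{F. plane_independent_in H F \<and> \<E>0 \<subseteq> F}"
  have fin: "finite (card ` ?P)" by simp
  have ne: "card ` ?P \<noteq> {}" using assms by blast
  obtain E where E: "E \<in> ?P" "card E = Max (card ` ?P)" using Max_in[OF fin ne] by auto
  have "plane_max_independent_in H E"
    unfolding plane_max_independent_in_def
  proof (intro conjI allI impI)
    show "plane_independent_in H E" using E by simp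
    fix F assume F: "plane_independent_in H F \<and> E \<subseteq> F"
    then have "F \<in> ?P" using E by auto
    then have "card F \<le> card E" using E(2) Max_ge[OF fin] by simp
    then show "F = E" using F card_subset_eq[of F E] by (metis card_seteq finite)
  qed
  then show ?thesis using E by auto
qed

theorem lemma6p4:
  fixes C :: "(('a::{field,finite} ^ 7) set \<times> ('a ^ 7) set) set"
  defines "q \<equiv> CARD('a)"
  assumes "flag_max_independent C"
    and "card {S :: ('a ^ 7) set. solid S \<and> saturated C S}
           > q^7 + 2*q^6 + 2*q^5 + 3*q^4 + 2*q^3 + 2*q^2 + q + 1"
  shows "\<exists>H \<E>. proj_subspace 5 H \<and> plane_max_independent_in H \<E> \<and> C = Lambda H \<E>"
proof -
  let ?SS = "{S :: ('a ^ 7) set. solid S \<and> saturated C S}"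
  have ind: "flag_independent C" and maxi: "\<forall>D. flag_independent D \<and> C \<subseteq> D \<longrightarrow> D = C"
    using assms(2) unfolding flag_max_independent_def by auto
  have big: "CARD('a)^7 + 2*CARD('a)^6 + 2*CARD('a)^5 + 3*CARD('a)^4 + 2*CARD('a)^3 + 2*CARD('a)^2 + CARD('a) + 1 < card ?SS"
    using assms(3) unfolding q_def .
  have sol: "\<forall>T\<in>?SS. vec.subspace T \<and> vec.dim T = 4" by (simp add: proj_subspace_def)
  have meet: "\<forall>T\<in>?SS. \<forall>T'\<in>?SS. \<exists>G. G \<in> hyps T \<and> T' \<subseteq> G"
  proof (intro ballI)
    fix T T' assume T: "T \<in> ?SS" and T': "T' \<in> ?SS"
    have "2 \<le> vec.dim (T \<inter> T')" using sat_meet[OF ind] T T' by simp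
    moreover have "vec.subspace T" "vec.dim T = 4" "vec.subspace T'" "vec.dim T' = 4"
      using T T' by (simp_all add: proj_subspace_def)
    ultimately show "\<exists>G. G \<in> hyps T \<and> T' \<subseteq> G" using meet_hyp[of T T'] by simp
  qed
  obtain H where H: "vec.subspace H" "vec.dim H = 6" and SSH: "\<forall>T\<in>?SS. T \<subseteq> H"
    using L1[OF sol meet big] by blast
  have EH: "E \<subseteq> H" if "(E, S) \<in> C" for E S
    by (rule planes_in_H[OF ind H SSH big that])
  define \<E>0 where "\<E>0 = {E. \<exists>S. (E, S) \<in> C \<and> \<not> S \<subseteq> H}"
  have p1: "\<forall>E\<in>\<E>0. plane E \<and> E \<subseteq> H"
  proof
    fix E assume "E \<in> \<E>0"
    then obtain S where S: "(E, S) \<in> C" "\<not> S \<subseteq> H" unfolding \<E>0_def by blast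
    have "flag23 (E, S)" using ind S(1) unfolding flag_independent_def by blast
    then show "plane E \<and> E \<subseteq> H" using EH[OF S(1)] unfolding flag23_def by simp
  qed
  have p2: "\<forall>E\<in>\<E>0. \<forall>E'\<in>\<E>0. \<not> proj_disjoint E E'"
  proof (intro ballI)
    fix E E' assume E: "E \<in> \<E>0" and E': "E' \<in> \<E>0"
    obtain S where S: "(E, S) \<in> C" "\<not> S \<subseteq> H" using E unfolding \<E>0_def by blast
    obtain S' where S': "(E', S') \<in> C" "\<not> S' \<subseteq> H" using E' unfolding \<E>0_def by blast
    have f1: "flag23 (E, S)" using ind S(1) unfolding flag_independent_def by blast
    have f2: "flag23 (E', S')" using ind S'(1) unfolding flag_independent_def by blast
    have sE: "vec.subspace E" "vec.dim E = 3" and sS: "vec.subspace S" "vec.dim S = 4" and ES: "E \<subseteq> S"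
      using f1 unfolding flag23_def by (simp_all add: proj_subspace_def)
    have sE': "vec.subspace E'" "vec.dim E'= 3" and sS': "vec.subspace S'" "vec.dim S' = 4" and ES': "E' \<subseteq> S'"
      using f2 unfolding flag23_def by (simp_all add: proj_subspace_def)
    have e1: "E = H \<inter> S"
    proof -
      have "vec.dim (H \<inter> S) = 3" using inter_hyp[OF H sS(1) S(2)] sS(2) by simp
      moreover have "E \<subseteq> H \<inter> S" using EH[OF S(1)] ES by blast
      ultimately show ?thesis using eq_by_dim[OF sE(1) vec.subspace_inter[OF H(1) sS(1)]] sE(2) by simp
    qed
    have e2: "E' = H \<inter> S'"
    proof -
      have "vec.dim (H \<inter> S') = 3" using inter_hyp[OF H sS'(1) S'(2)] sS'(2) by simp
      moreover have "E' \<subseteq> H \<inter> S'" using EH[OF S'(1)] ES' by blast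
      ultimately show ?thesis using eq_by_dim[OF sE'(1) vec.subspace_inter[OF H(1) sS'(1)]] sE'(2) by simp
    qed
    show "\<not> proj_disjoint E E'"
    proof
      assume pd: "proj_disjoint E E'"
      then have d: "E \<inter> E' = {0}" unfolding proj_disjoint_def .
      have a1: "E \<inter> S' = {0}" using d e1 e2 by blast
      have a2: "E' \<inter> S = {0}" using d e1 e2 by blast
      have "(E, S) \<noteq> (E', S')"
      proof
        assume "(E, S) = (E', S')"
        then have "E = {0}" using d by simp
        then show False using sE(2) by simp
      qed
      then have "flag_adj (E, S) (E', S')" using a1 a2 unfolding flag_adj_def proj_disjoint_def by simp
      then show False using ind S(1) S'(1) unfolding flag_independent_def by blast
    qed
  qed
  have E0: "plane_independent_in H \<E>0" unfolding plane_independent_in_def using p1 p2 by blast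
  obtain \<E> where EE: "\<E>0 \<subseteq> \<E>" "plane_max_independent_in H \<E>" using max_extend[OF E0] by blast
  have Ei: "plane_independent_in H \<E>" using EE(2) unfolding plane_max_independent_in_def by simp
  have sub: "C \<subseteq> Lambda H \<E>"
  proof
    fix F assume F: "F \<in> C"
    obtain E S where FES: "F = (E, S)" by (cases F)
    have "flag23 (E, S)" using ind F FES unfolding flag_independent_def by blast
    moreover have "S \<subseteq> H \<or> E \<in> \<E>" using F FES EE(1) unfolding \<E>0_def by blast
    ultimately show "F \<in> Lambda H \<E>" unfolding Lambda_def FES by simp
  qed
  have "Lambda H \<E> = C" using maxi Lambda_independent[OF H Ei] sub by blast
  moreover have "proj_subspace 5 H" using H by (simp add: proj_subspace_def)
  ultimately show ?thesis using EE(2) by metis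
qed

end
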